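(* Let $X_1,\dots,X_n$ be i.i.d. random vectors in $\mathbb{R}^p$ with mean $0$ and covariance matrix $\Sigma\neq0$, in the asymptotic regime $n\to\infty$, $p=p_n$. Let $\hat\Sigma=n^{-1}\sum_{i=1}^nX_iX_i^T$, $\hat f=(\mathrm{tr}(\hat\Sigma^2))^{1/2}$, $f=(\mathrm{tr}(\Sigma^2))^{1/2}$. (i) If $\mathbb{E}[(X_1^TX_1)^2]=o(nf^2)$, then $\mathbb{E}|\hat\Sigma/\hat f-\Sigma/f|_F^2=o(1)$, and consequently $\rho(\hat\Sigma/\hat f-\Sigma/f)=o_{\mathbb{P}}(1)$. (ii) If $nf^2=o(\mathbb{E}[(X_1^TX_1)^2])$, $K_2=O(n^{3/4})$, and $\mathbb{E}[(X_1^TX_2)^4]=o(\{\mathbb{E}[(X_1^TX_1)^2]\}^2)$, then $\rho(\hat\Sigma/\hat f)=o_{\mathbb{P}}(1)$, and $\rho(\hat\Sigma/\hat f-\Sigma/f)=o_{\mathbb{P}}(1)$ holds if and only if $\rho(\Sigma)=o(f)$.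
   Context: $|A|_F$ is the Frobenius norm and $\rho(A)$ the spectral norm of a matrix $A$. $f_1=\mathrm{tr}(\Sigma)$ and $K_2^4=\mathbb{E}|(X_1^TX_1-f_1)/f|^4$. *)

theory Defs
  imports "HOL-Probability.Probability" "HOL-Library.Landau_Symbols"
begin

text \<open>Vectors in R^d are functions nat => real (only indices < d matter);
  d x d matrices are functions nat => nat => real (only indices < d matter).\<close>

definition vdot :: "nat \<Rightarrow> (nat \<Rightarrow> real) \<Rightarrow> (nat \<Rightarrow> real) \<Rightarrow> real" where
  "vdot d x y = (\<Sum>j<d. x j * y j)"

definition mtrace :: "nat \<Rightarrow> (nat \<Rightarrow> nat \<Rightarrow> real) \<Rightarrow> real" where
  "mtrace d A = (\<Sum>i<d. A i i)"

definition mmult :: "nat \<Rightarrow> (nat \<Rightarrow> nat \<Rightarrow> real) \<Rightarrow> (nat \<Rightarrow> nat \<Rightarrow> real) \<Rightarrow> nat \<Rightarrow> nat \<Rightarrow> real" where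
  "mmult d A B i k = (\<Sum>j<d. A i j * B j k)"

definition frob :: "nat \<Rightarrow> (nat \<Rightarrow> nat \<Rightarrow> real) \<Rightarrow> real" where
  "frob d A = sqrt (\<Sum>i<d. \<Sum>j<d. (A i j)\<^sup>2)"

definition specnorm :: "nat \<Rightarrow> (nat \<Rightarrow> nat \<Rightarrow> real) \<Rightarrow> real" where
  "specnorm d A = Sup {sqrt (\<Sum>i<d. (\<Sum>j<d. A i j * x j)\<^sup>2) | x. (\<Sum>j<d. (x j)\<^sup>2) = 1}"

definition sample_cov :: "nat \<Rightarrow> (nat \<Rightarrow> 'a \<Rightarrow> nat \<Rightarrow> real) \<Rightarrow> 'a \<Rightarrow> nat \<Rightarrow> nat \<Rightarrow> real" where
  "sample_cov n Xs \<omega> j k = (\<Sum>i<n. Xs i \<omega> j * Xs i \<omega> k) / real n"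

definition fnorm :: "nat \<Rightarrow> (nat \<Rightarrow> nat \<Rightarrow> real) \<Rightarrow> real" where
  "fnorm d A = sqrt (mtrace d (mmult d A A))"

definition norm_diff :: "nat \<Rightarrow> nat \<Rightarrow> (nat \<Rightarrow> 'a \<Rightarrow> nat \<Rightarrow> real) \<Rightarrow> (nat \<Rightarrow> nat \<Rightarrow> real) \<Rightarrow> 'a \<Rightarrow> nat \<Rightarrow> nat \<Rightarrow> real" where
  "norm_diff d n Xs S \<omega> j k =
     sample_cov n Xs \<omega> j k / fnorm d (sample_cov n Xs \<omega>) - S j k / fnorm d S"

definition conv_prob_zero :: "(nat \<Rightarrow> 'a measure) \<Rightarrow> (nat \<Rightarrow> 'a \<Rightarrow> real) \<Rightarrow> bool" where
  "conv_prob_zero M Y \<longleftrightarrow>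
     (\<forall>e>0. (\<lambda>n. measure (M n) {\<omega> \<in> space (M n). \<bar>Y n \<omega>\<bar> > e}) \<longlonglongrightarrow> 0)"

abbreviation vecspace :: "nat \<Rightarrow> (nat \<Rightarrow> real) measure" where
  "vecspace d \<equiv> PiM {..<d} (\<lambda>_. borel)"

text \<open>The model: for every n \<ge> 1, on a probability space M n, X n 0, ..., X n (n-1) are
  i.i.d. random vectors in R^(p n) with mean 0 and covariance matrix S n \<noteq> 0.\<close>
definition iid_model ::
  "(nat \<Rightarrow> 'a measure) \<Rightarrow> (nat \<Rightarrow> nat) \<Rightarrow> (nat \<Rightarrow> nat \<Rightarrow> 'a \<Rightarrow> nat \<Rightarrow> real)
     \<Rightarrow> (nat \<Rightarrow> nat \<Rightarrow> nat \<Rightarrow> real) \<Rightarrow> bool" where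
  "iid_model M p X S \<longleftrightarrow> (\<forall>n>0.
     prob_space (M n) \<and>
     (\<forall>i<n. (\<lambda>\<omega>. restrict (X n i \<omega>) {..<p n}) \<in> M n \<rightarrow>\<^sub>M vecspace (p n)) \<and>
     prob_space.indep_vars (M n) (\<lambda>_. vecspace (p n))
        (\<lambda>i \<omega>. restrict (X n i \<omega>) {..<p n}) {..<n} \<and>
     (\<forall>i<n. distr (M n) (vecspace (p n)) (\<lambda>\<omega>. restrict (X n i \<omega>) {..<p n})
            = distr (M n) (vecspace (p n)) (\<lambda>\<omega>. restrict (X n 0 \<omega>) {..<p n})) \<and>
     (\<forall>j<p n. integrable (M n) (\<lambda>\<omega>. (X n 0 \<omega> j)\<^sup>2)) \<and>
     (\<forall>j<p n. integral\<^sup>L (M n) (\<lambda>\<omega>. X n 0 \<omega> j) = 0) \<and>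
     (\<forall>j<p n. \<forall>k<p n. S n j k = integral\<^sup>L (M n) (\<lambda>\<omega>. X n 0 \<omega> j * X n 0 \<omega> k)) \<and>
     (\<exists>j<p n. \<exists>k<p n. S n j k \<noteq> 0))"

end

theory Submission
  imports Defs
begin

definition mv :: "nat \<Rightarrow> (nat \<Rightarrow> nat \<Rightarrow> real) \<Rightarrow> (nat \<Rightarrow> real) \<Rightarrow> nat \<Rightarrow> real" where
  "mv d A x i = (\<Sum>j<d. A i j * x j)"

lemma L2_scale: "L2_set (\<lambda>i. c * f i) A = \<bar>c\<bar> * L2_set f A"
  unfolding L2_set_def
  by (simp add: power_mult_distrib real_sqrt_mult flip: sum_distrib_left)

lemma L2_abs: "L2_set (\<lambda>i. \<bar>f i\<bar>) A = L2_set f A"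
  unfolding L2_set_def by simp

lemma L2_sq: "(L2_set f A)\<^sup>2 = (\<Sum>i\<in>A. (f i)\<^sup>2)"
  unfolding L2_set_def by (simp add: sum_nonneg)

lemma CS_abs: "\<bar>\<Sum>i\<in>A. f i * g i\<bar> \<le> L2_set f A * L2_set g A"
proof -
  have "\<bar>\<Sum>i\<in>A. f i * g i\<bar> \<le> (\<Sum>i\<in>A. \<bar>f i\<bar> * \<bar>g i\<bar>)"
    by (metis (no_types, lifting) abs_mult sum.cong sum_abs)
  also have "\<dots> \<le> L2_set f A * L2_set g A" by (rule L2_set_mult_ineq)
  finally show ?thesis .
qed

lemma CS_le: "(\<Sum>i\<in>A. f i * g i) \<le> L2_set f A * L2_set g A"
  using CS_abs[of f g A] by linarith

lemma frob_L2: "frob d A = L2_set (\<lambda>i. L2_set (A i) {..<d}) {..<d}"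
  unfolding frob_def L2_set_def by (simp add: sum_nonneg)

lemma frob_L2_pair: "frob d A = L2_set (\<lambda>p. A (fst p) (snd p)) ({..<d} \<times> {..<d})"
  unfolding frob_def L2_set_def by (simp add: sum.cartesian_product case_prod_beta')

lemma mv_bound: "L2_set (mv d A x) {..<d} \<le> frob d A * L2_set x {..<d}"
proof -
  have "L2_set (mv d A x) {..<d} = L2_set (\<lambda>i. \<bar>mv d A x i\<bar>) {..<d}" by (simp add: L2_abs)
  also have "\<dots> \<le> L2_set (\<lambda>i. L2_set x {..<d} * L2_set (A i) {..<d}) {..<d}"
  proof (rule L2_set_mono)
    fix i show "\<bar>mv d A x i\<bar> \<le> L2_set x {..<d} * L2_set (A i) {..<d}"
      unfolding mv_def using CS_abs[of "A i" x "{..<d}"] by (simp add: mult.commute)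
  qed simp
  also have "\<dots> = L2_set x {..<d} * frob d A"
    by (simp add: L2_scale frob_L2)
  finally show ?thesis by (simp add: mult.commute)
qed

lemma specnorm_alt: "specnorm d A = Sup {L2_set (mv d A x) {..<d} | x. L2_set x {..<d} = 1}"
  unfolding specnorm_def L2_set_def mv_def by simp

lemma unit_exists: "0 < (d::nat) \<Longrightarrow> L2_set (\<lambda>j. if j = 0 then 1 else 0) {..<d} = 1"
proof -
  have "(\<Sum>j<d. ((\<lambda>j::nat. if j = 0 then 1 else 0::real) j)\<^sup>2) = (\<Sum>j<d. (if j = 0 then 1 else 0))"
    by (intro sum.cong) auto
  also assume "0 < d"
  hence "(\<Sum>j<d. (if j = 0 then 1 else 0::real)) = 1" by (simp add: sum.delta)
  finally show ?thesis unfolding L2_set_def by simp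
qed

lemma specset_ne: "0 < d \<Longrightarrow> {L2_set (mv d A x) {..<d} | x. L2_set x {..<d} = 1} \<noteq> {}"
  using unit_exists by blast

lemma specset_bdd: "bdd_above {L2_set (mv d A x) {..<d} | x. L2_set x {..<d} = 1}"
proof -
  have "\<forall>y\<in>{L2_set (mv d A x) {..<d} | x. L2_set x {..<d} = 1}. y \<le> frob d A"
  proof
    fix y assume "y \<in> {L2_set (mv d A x) {..<d} | x. L2_set x {..<d} = 1}"
    then obtain x where "y = L2_set (mv d A x) {..<d}" "L2_set x {..<d} = 1" by blast
    thus "y \<le> frob d A" using mv_bound[of d A x] by simp
  qed
  thus ?thesis unfolding bdd_above_def by blast
qed

lemma specnorm_ge: "0 < d \<Longrightarrow> L2_set x {..<d} = 1 \<Longrightarrow> L2_set (mv d A x) {..<d} \<le> specnorm d A"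
  unfolding specnorm_alt by (rule cSup_upper) (use specset_bdd in auto)

lemma specnorm_le: "0 < d \<Longrightarrow> (\<And>x. L2_set x {..<d} = 1 \<Longrightarrow> L2_set (mv d A x) {..<d} \<le> c) \<Longrightarrow> specnorm d A \<le> c"
  unfolding specnorm_alt by (rule cSup_least) (use specset_ne in auto)

lemma specnorm_nonneg: "0 < d \<Longrightarrow> 0 \<le> specnorm d A"
  using specnorm_ge[OF _ unit_exists, of d A] L2_set_nonneg[of "mv d A _"] by (meson order_trans)

lemma specnorm_le_frob: assumes "0 < d" shows "specnorm d A \<le> frob d A"
proof (rule specnorm_le[OF assms])
  fix x assume "L2_set x {..<d} = 1"
  then show "L2_set (mv d A x) {..<d} \<le> frob d A" using mv_bound[of d A x] by simp
qed

lemma specnorm_lin: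
  assumes d: "0 < d" and C: "\<And>j k. C j k = a * A j k + b * B j k"
  shows "specnorm d C \<le> \<bar>a\<bar> * specnorm d A + \<bar>b\<bar> * specnorm d B"
proof (rule specnorm_le[OF d])
  fix x assume x: "L2_set x {..<d} = 1"
  have "mv d C x = (\<lambda>i. a * mv d A x i + b * mv d B x i)"
    by (auto simp: mv_def C sum.distrib sum_distrib_left algebra_simps)
  hence "L2_set (mv d C x) {..<d} \<le> L2_set (\<lambda>i. a * mv d A x i) {..<d} + L2_set (\<lambda>i. b * mv d B x i) {..<d}"
    using L2_set_triangle_ineq by simp
  also have "\<dots> \<le> \<bar>a\<bar> * specnorm d A + \<bar>b\<bar> * specnorm d B"
    unfolding L2_scale
    by (intro add_mono mult_left_mono specnorm_ge[OF d x]) auto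
  finally show "L2_set (mv d C x) {..<d} \<le> \<bar>a\<bar> * specnorm d A + \<bar>b\<bar> * specnorm d B" .
qed

lemma L2_minus_comm: "L2_set (\<lambda>i. v i - u i) I = L2_set (\<lambda>i. u i - v i) I"
  unfolding L2_set_def by (simp add: power2_commute)

lemma L2_uminus[simp]: "L2_set (\<lambda>i. - f i) A = L2_set f A"
  unfolding L2_set_def by simp

lemma L2_normdiff:
  assumes fin: "finite I" and pos: "L2_set v I > 0"
  shows "L2_set (\<lambda>i. u i / L2_set u I - v i / L2_set v I) I \<le> 2 * L2_set (\<lambda>i. u i - v i) I / L2_set v I"
proof -
  define nu where "nu = L2_set u I"
  define nv where "nv = L2_set v I"
  define e where "e = L2_set (\<lambda>i. u i - v i) I"
  have nvp: "nv > 0" using pos nv_def by simp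
  have t1: "nu \<le> e + nv"
  proof -
    have "nu = L2_set (\<lambda>i. (u i - v i) + v i) I" unfolding nu_def by simp
    also have "\<dots> \<le> e + nv" unfolding e_def nv_def by (rule L2_set_triangle_ineq)
    finally show ?thesis .
  qed
  have t2: "nv \<le> e + nu"
  proof -
    have "nv = L2_set (\<lambda>i. (v i - u i) + u i) I" unfolding nv_def by simp
    also have "\<dots> \<le> L2_set (\<lambda>i. v i - u i) I + nu" unfolding nu_def by (rule L2_set_triangle_ineq)
    moreover have "L2_set (\<lambda>i. v i - u i) I = L2_set (\<lambda>i. u i - v i) I" by (rule L2_minus_comm)
    ultimately show ?thesis unfolding e_def by linarith
  qed
  show ?thesis
  proof (cases "nu = 0")
    case True
    hence u0: "\<forall>i\<in>I. u i = 0" using L2_set_eq_0_iff[OF fin] nu_def by auto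
    have "L2_set (\<lambda>i. u i / L2_set u I - v i / L2_set v I) I = L2_set (\<lambda>i. (- 1 / nv) * v i) I"
      by (rule L2_set_cong) (auto simp: u0 nv_def)
    also have "\<dots> = 1" unfolding L2_scale using nvp by (simp add: nv_def)
    also have "e = nv"
    proof -
      have "e = L2_set (\<lambda>i. (- 1) * v i) I" unfolding e_def by (rule L2_set_cong) (auto simp: u0)
      thus ?thesis by (simp add: L2_scale nv_def)
    qed
    hence "1 \<le> 2 * e / nv" using nvp by simp
    finally show ?thesis unfolding e_def nv_def .
  next
    case False
    hence nup: "nu > 0" using nu_def by (simp add: order_less_le)
    have "L2_set (\<lambda>i. u i / L2_set u I - v i / L2_set v I) I
          = L2_set (\<lambda>i. (1 / nv) * (u i - v i) + (1 / nu - 1 / nv) * u i) I"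
      using nup nvp unfolding nu_def nv_def by (intro L2_set_cong) (auto simp: field_simps)
    also have "\<dots> \<le> L2_set (\<lambda>i. (1 / nv) * (u i - v i)) I + L2_set (\<lambda>i. (1 / nu - 1 / nv) * u i) I"
      by (rule L2_set_triangle_ineq)
    also have "\<dots> = e / nv + \<bar>1 / nu - 1 / nv\<bar> * nu"
      unfolding L2_scale using nvp by (simp add: e_def nu_def)
    also have "\<bar>1 / nu - 1 / nv\<bar> * nu = \<bar>nv - nu\<bar> / nv"
    proof -
      have e: "1 / nu - 1 / nv = (nv - nu) / (nu * nv)" using nup nvp by (simp add: field_simps)
      have a1: "\<bar>(nv - nu) / (nu * nv)\<bar> = \<bar>nv - nu\<bar> / (nu * nv)" using nup nvp by (simp add: abs_divide)
      have a2: "\<bar>nv - nu\<bar> / (nu * nv) * nu = \<bar>nv - nu\<bar> / nv" using nup nvp by simp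
      show ?thesis by (simp only: e a1 a2)
    qed
    also have "\<bar>nv - nu\<bar> / nv \<le> e / nv" using t1 t2 nvp by (intro divide_right_mono) auto
    finally show ?thesis unfolding e_def nv_def by simp
  qed
qed

definition gram :: "nat \<Rightarrow> (nat \<Rightarrow> nat \<Rightarrow> real) \<Rightarrow> nat \<Rightarrow> nat \<Rightarrow> real" where
  "gram d xs i l = (\<Sum>j<d. xs i j * xs l j)"

definition sc :: "nat \<Rightarrow> (nat \<Rightarrow> nat \<Rightarrow> real) \<Rightarrow> nat \<Rightarrow> nat \<Rightarrow> real" where
  "sc n xs j k = (\<Sum>i<n. xs i j * xs i k) / real n"

lemma sample_cov_sc: "sample_cov n Xs \<omega> = sc n (\<lambda>i. Xs i \<omega>)"
  by (simp add: fun_eq_iff sample_cov_def sc_def)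

lemma sum4_swap:
  "(\<Sum>j\<in>J. \<Sum>k\<in>K. \<Sum>i\<in>I. \<Sum>l\<in>L. F i l j k) = (\<Sum>i\<in>I. \<Sum>l\<in>L. \<Sum>j\<in>J. \<Sum>k\<in>K. F i l j k)"
proof -
  have "(\<Sum>j\<in>J. \<Sum>k\<in>K. \<Sum>i\<in>I. \<Sum>l\<in>L. F i l j k) = (\<Sum>j\<in>J. \<Sum>i\<in>I. \<Sum>k\<in>K. \<Sum>l\<in>L. F i l j k)"
    by (intro sum.cong refl) (rule sum.swap)
  also have "\<dots> = (\<Sum>j\<in>J. \<Sum>i\<in>I. \<Sum>l\<in>L. \<Sum>k\<in>K. F i l j k)"
    by (intro sum.cong refl) (rule sum.swap)
  also have "\<dots> = (\<Sum>i\<in>I. \<Sum>j\<in>J. \<Sum>l\<in>L. \<Sum>k\<in>K. F i l j k)"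
    by (rule sum.swap)
  also have "\<dots> = (\<Sum>i\<in>I. \<Sum>l\<in>L. \<Sum>j\<in>J. \<Sum>k\<in>K. F i l j k)"
    by (intro sum.cong refl) (rule sum.swap)
  finally show ?thesis .
qed

lemma sc_frob_sq:
  "(\<Sum>j<d. \<Sum>k<d. (sc n xs j k)\<^sup>2) = (\<Sum>i<n. \<Sum>l<n. (gram d xs i l)\<^sup>2) / (real n)\<^sup>2"
proof -
  have "(\<Sum>j<d. \<Sum>k<d. (\<Sum>i<n. xs i j * xs i k)\<^sup>2)
      = (\<Sum>j<d. \<Sum>k<d. \<Sum>i<n. \<Sum>l<n. (xs i j * xs l j) * (xs i k * xs l k))"
    by (simp add: power2_eq_square sum_product mult_ac)
  also have "\<dots> = (\<Sum>i<n. \<Sum>l<n. \<Sum>j<d. \<Sum>k<d. (xs i j * xs l j) * (xs i k * xs l k))"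
    by (rule sum4_swap)
  also have "\<dots> = (\<Sum>i<n. \<Sum>l<n. (gram d xs i l)\<^sup>2)"
    by (simp add: gram_def power2_eq_square sum_product)
  finally show ?thesis
    by (simp add: sc_def power_divide flip: sum_divide_distrib)
qed

lemma sc_sym: "sc n xs j k = sc n xs k j"
  by (simp add: sc_def mult.commute)

lemma fnorm_sym: "(\<And>j k. j < d \<Longrightarrow> k < d \<Longrightarrow> A j k = A k j) \<Longrightarrow> fnorm d A = frob d A"
  unfolding fnorm_def frob_def mtrace_def mmult_def
  by (intro arg_cong[where f=sqrt] sum.cong refl) (simp add: power2_eq_square)


lemma sc_mv_bound:
  fixes xs :: "nat \<Rightarrow> nat \<Rightarrow> real"
  assumes n: "0 < n" and x: "L2_set x {..<d} = 1"
    and a: "\<And>i. i < n \<Longrightarrow> gram d xs i i \<le> a"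
    and b: "(\<Sum>i<n. \<Sum>l<n. if i = l then 0 else (gram d xs i l)\<^sup>2) \<le> b\<^sup>2" and b0: "0 \<le> b"
  shows "real n * L2_set (mv d (sc n xs) x) {..<d} \<le> a + b"
proof -
  define v where "v = mv d (sc n xs) x"
  define av where "av i = (\<Sum>j<d. xs i j * x j)" for i
  define A where "A = (\<Sum>i<n. (av i)\<^sup>2)"
  have nr: "real n > 0" using n by simp
  have v_eq: "v k = (\<Sum>i<n. xs i k * av i) / real n" for k
  proof -
    have "v k = (\<Sum>j<d. \<Sum>i<n. xs i k * xs i j * x j) / real n"
      by (simp add: v_def mv_def sc_def sum_divide_distrib sum_distrib_right)
    also have "(\<Sum>j<d. \<Sum>i<n. xs i k * xs i j * x j) = (\<Sum>i<n. xs i k * av i)"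
      by (subst sum.swap) (simp add: av_def sum_distrib_left mult_ac)
    finally show ?thesis .
  qed
  have xv_eq: "(\<Sum>k<d. xs i k * v k) = (\<Sum>l<n. gram d xs i l * av l) / real n" for i
  proof -
    have "(\<Sum>k<d. xs i k * v k) = (\<Sum>k<d. \<Sum>l<n. xs i k * xs l k * av l) / real n"
      by (simp add: v_eq sum_divide_distrib sum_distrib_left mult_ac)
    also have "(\<Sum>k<d. \<Sum>l<n. xs i k * xs l k * av l) = (\<Sum>l<n. gram d xs i l * av l)"
      by (subst sum.swap) (simp add: gram_def sum_distrib_left sum_distrib_right mult_ac)
    finally show ?thesis .
  qed
  have vv: "(\<Sum>k<d. (v k)\<^sup>2) = (\<Sum>i<n. \<Sum>l<n. av i * av l * gram d xs i l) / (real n)\<^sup>2"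
  proof -
    have "(\<Sum>k<d. (v k)\<^sup>2) = (\<Sum>k<d. v k * ((\<Sum>i<n. xs i k * av i) / real n))"
      by (intro sum.cong refl) (metis power2_eq_square v_eq)
    also have "\<dots> = (\<Sum>k<d. \<Sum>i<n. av i * xs i k * v k) / real n"
      by (simp add: sum_divide_distrib sum_distrib_left mult_ac)
    also have "(\<Sum>k<d. \<Sum>i<n. av i * xs i k * v k) = (\<Sum>i<n. av i * (\<Sum>k<d. xs i k * v k))"
      by (subst sum.swap) (simp add: sum_distrib_left mult_ac)
    also have "\<dots> = (\<Sum>i<n. \<Sum>l<n. av i * av l * gram d xs i l) / real n"
      by (simp only: xv_eq) (simp add: sum_divide_distrib sum_distrib_left mult_ac)
    finally show ?thesis by (simp add: power2_eq_square)
  qed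
  have split: "(\<Sum>i<n. \<Sum>l<n. av i * av l * gram d xs i l)
      = (\<Sum>i<n. (av i)\<^sup>2 * gram d xs i i) + (\<Sum>i<n. \<Sum>l<n. if i = l then 0 else av i * av l * gram d xs i l)"
  proof -
    have "(\<Sum>l<n. av i * av l * gram d xs i l) = (av i)\<^sup>2 * gram d xs i i + (\<Sum>l<n. if i = l then 0 else av i * av l * gram d xs i l)"
      if "i < n" for i
    proof -
      have "(\<Sum>l<n. av i * av l * gram d xs i l) = (\<Sum>l<n. (if i = l then av i * av l * gram d xs i l else 0)) + (\<Sum>l<n. if i = l then 0 else av i * av l * gram d xs i l)"
        by (simp only: sum.distrib[symmetric]) (intro sum.cong refl, simp)
      also have "(\<Sum>l<n. (if i = l then av i * av l * gram d xs i l else 0)) = (av i)\<^sup>2 * gram d xs i i"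
        using that by (simp add: sum.delta sum.delta' power2_eq_square)
      finally show ?thesis .
    qed
    thus ?thesis by (simp add: sum.distrib)
  qed
  have a0: "0 \<le> a" using a[OF n] by (smt (verit) gram_def sum_nonneg zero_le_square)
  have diag: "(\<Sum>i<n. (av i)\<^sup>2 * gram d xs i i) \<le> a * A"
    unfolding A_def sum_distrib_left by (intro sum_mono) (simp add: a mult.commute mult_right_mono)
  have offd: "(\<Sum>i<n. \<Sum>l<n. if i = l then 0 else av i * av l * gram d xs i l) \<le> A * b"
  proof -
    define P where "P = {..<n} \<times> {..<n}"
    have "(\<Sum>i<n. \<Sum>l<n. if i = l then 0 else av i * av l * gram d xs i l)
        = (\<Sum>p\<in>P. (av (fst p) * av (snd p)) * (if fst p = snd p then 0 else gram d xs (fst p) (snd p)))"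
      unfolding P_def sum.cartesian_product by (intro sum.cong refl) auto
    also have "\<dots> \<le> L2_set (\<lambda>p. av (fst p) * av (snd p)) P * L2_set (\<lambda>p. if fst p = snd p then 0 else gram d xs (fst p) (snd p)) P"
      by (rule CS_le)
    also have "L2_set (\<lambda>p. av (fst p) * av (snd p)) P = A"
    proof -
      have "(\<Sum>p\<in>P. (av (fst p) * av (snd p))\<^sup>2) = A\<^sup>2"
        unfolding P_def A_def
        by (simp add: power2_eq_square sum_product mult_ac sum.cartesian_product case_prod_beta')
      moreover have "A \<ge> 0" unfolding A_def by (simp add: sum_nonneg)
      ultimately show ?thesis unfolding L2_set_def by simp
    qed
    also have "L2_set (\<lambda>p. if fst p = snd p then 0 else gram d xs (fst p) (snd p)) P \<le> b"
    proof -
      have "(\<Sum>p\<in>P. (if fst p = snd p then 0 else gram d xs (fst p) (snd p))\<^sup>2)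
          = (\<Sum>i<n. \<Sum>l<n. if i = l then 0 else (gram d xs i l)\<^sup>2)"
        unfolding P_def sum.cartesian_product by (intro sum.cong refl) auto
      hence "L2_set (\<lambda>p. if fst p = snd p then 0 else gram d xs (fst p) (snd p)) P \<le> sqrt (b\<^sup>2)"
        unfolding L2_set_def using b by (simp del: real_sqrt_abs)
      thus ?thesis using b0 by simp
    qed
    finally show ?thesis
      using \<open>L2_set (\<lambda>p. av (fst p) * av (snd p)) P = A\<close> by (simp add: A_def sum_nonneg mult_left_mono)
  qed
  have Abound: "A \<le> real n * L2_set v {..<d}"
  proof -
    have "A = (\<Sum>i<n. av i * (\<Sum>j<d. xs i j * x j))" unfolding A_def av_def by (simp add: power2_eq_square)
    also have "\<dots> = (\<Sum>j<d. x j * (\<Sum>i<n. xs i j * av i))"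
      by (simp add: sum_distrib_left mult_ac) (subst sum.swap, simp)
    also have "\<dots> = (\<Sum>j<d. real n * (x j * v j))"
      by (intro sum.cong refl) (use nr in \<open>simp add: v_eq\<close>)
    also have "\<dots> = real n * (\<Sum>j<d. x j * v j)" by (simp add: sum_distrib_left)
    also have "\<dots> \<le> real n * (L2_set x {..<d} * L2_set v {..<d})"
      using nr by (intro mult_left_mono CS_le) auto
    finally show ?thesis using x by simp
  qed
  define L where "L = L2_set v {..<d}"
  have "(real n * L)\<^sup>2 = (\<Sum>i<n. \<Sum>l<n. av i * av l * gram d xs i l)"
    using vv nr unfolding L_def power_mult_distrib L2_sq by simp
  also have "\<dots> \<le> (a + b) * A" using split diag offd by (simp add: algebra_simps)
  also have "\<dots> \<le> (a + b) * (real n * L)" using Abound a0 b0 unfolding L_def by (intro mult_left_mono) auto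
  finally have ineq: "(real n * L) * (real n * L) \<le> (a + b) * (real n * L)" by (simp add: power2_eq_square)
  show ?thesis
  proof (cases "real n * L = 0")
    case True
    hence "real n * L2_set (mv d (sc n xs) x) {..<d} = 0" unfolding L_def v_def .
    thus ?thesis using a0 b0 by linarith
  next
    case False
    have "0 \<le> real n * L" unfolding L_def by simp
    hence "real n * L > 0" using False by linarith
    hence "real n * L \<le> a + b" by (rule mult_right_le_imp_le[OF ineq])
    thus ?thesis unfolding v_def L_def .
  qed
qed

lemma L2_div: "L2_set (\<lambda>i. f i / c) A = L2_set f A / \<bar>c\<bar>"
  using L2_scale[of "1 / c" f A] by (simp add: divide_inverse mult.commute abs_inverse)

lemma gram_diag_nonneg: "0 \<le> gram d xs i i"
  unfolding gram_def by (simp add: sum_nonneg)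

lemma fnorm_sc: "fnorm d (sc n xs) = sqrt (\<Sum>i<n. \<Sum>l<n. (gram d xs i l)\<^sup>2) / real n"
proof -
  have "fnorm d (sc n xs) = frob d (sc n xs)" by (rule fnorm_sym) (rule sc_sym)
  also have "\<dots> = sqrt ((\<Sum>i<n. \<Sum>l<n. (gram d xs i l)\<^sup>2) / (real n)\<^sup>2)"
    unfolding frob_def sc_frob_sq ..
  also have "\<dots> = sqrt (\<Sum>i<n. \<Sum>l<n. (gram d xs i l)\<^sup>2) / real n"
    by (simp add: real_sqrt_divide)
  finally show ?thesis .
qed

lemma specnorm_scaled_bound:
  fixes xs :: "nat \<Rightarrow> nat \<Rightarrow> real"
  assumes n: "0 < n" and d: "0 < d"
    and Q: "c \<le> (\<Sum>i<n. (gram d xs i i)\<^sup>2)" and c: "0 < c"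
    and a: "\<And>i. i < n \<Longrightarrow> gram d xs i i \<le> a"
    and b: "(\<Sum>i<n. \<Sum>l<n. if i = l then 0 else (gram d xs i l)\<^sup>2) \<le> b\<^sup>2" and b0: "0 \<le> b"
  shows "specnorm d (\<lambda>j k. sc n xs j k / fnorm d (sc n xs)) \<le> (a + b) / sqrt c"
proof -
  define F where "F = fnorm d (sc n xs)"
  have nr: "real n > 0" using n by simp
  have a0: "0 \<le> a" using a[OF n] gram_diag_nonneg[of d xs 0] by linarith
  have "(\<Sum>i<n. (gram d xs i i)\<^sup>2) \<le> (\<Sum>i<n. \<Sum>l<n. (gram d xs i l)\<^sup>2)"
    by (intro sum_mono member_le_sum) auto
  hence "sqrt c \<le> sqrt (\<Sum>i<n. \<Sum>l<n. (gram d xs i l)\<^sup>2)" using Q by simp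
  hence Fb: "sqrt c / real n \<le> F" unfolding F_def fnorm_sc using nr by (simp add: divide_right_mono)
  have "0 < sqrt c / real n" using c nr by simp
  hence Fp: "F > 0" using Fb by linarith
  have Fq: "0 < F * (sqrt c / real n)" using Fp \<open>0 < sqrt c / real n\<close> by (rule mult_pos_pos)
  show ?thesis
  proof (rule specnorm_le[OF d])
    fix x assume x: "L2_set x {..<d} = 1"
    have "mv d (\<lambda>j k. sc n xs j k / F) x = (\<lambda>i. (1 / F) * mv d (sc n xs) x i)"
      by (auto simp: mv_def sum_distrib_left sum_divide_distrib)
    hence "L2_set (mv d (\<lambda>j k. sc n xs j k / F) x) {..<d} = L2_set (mv d (sc n xs) x) {..<d} / F"
      using Fp by (simp add: L2_div)
    also have "\<dots> \<le> ((a + b) / real n) / F"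
      using sc_mv_bound[OF n x a b b0] nr Fp by (intro divide_right_mono) (auto simp: field_simps)
    also have "\<dots> \<le> ((a + b) / real n) / (sqrt c / real n)"
      using Fb c nr a0 b0 Fq by (intro divide_left_mono) auto
    also have "\<dots> = (a + b) / sqrt c" using nr by simp
    finally show "L2_set (mv d (\<lambda>j k. sc n xs j k / fnorm d (sc n xs)) x) {..<d} \<le> (a + b) / sqrt c"
      unfolding F_def .
  qed
qed

lemma frob_normdiff:
  assumes sym: "\<And>j k. j < d \<Longrightarrow> k < d \<Longrightarrow> R j k = R k j" and fpos: "fnorm d R > 0"
  shows "frob d (\<lambda>j k. sc n xs j k / fnorm d (sc n xs) - R j k / fnorm d R)
          \<le> 2 * frob d (\<lambda>j k. sc n xs j k - R j k) / fnorm d R"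
proof -
  have e1: "fnorm d (sc n xs) = L2_set (\<lambda>p. sc n xs (fst p) (snd p)) ({..<d} \<times> {..<d})"
    using fnorm_sym[of d "sc n xs"] sc_sym frob_L2_pair by metis
  have e2: "fnorm d R = L2_set (\<lambda>p. R (fst p) (snd p)) ({..<d} \<times> {..<d})"
    using fnorm_sym[of d R] sym frob_L2_pair by metis
  show ?thesis
    unfolding frob_L2_pair e1 e2
    using L2_normdiff[of "{..<d} \<times> {..<d}" "\<lambda>p. R (fst p) (snd p)" "\<lambda>p. sc n xs (fst p) (snd p)"] fpos e2
    by simp
qed

definition QS :: "nat \<Rightarrow> (nat \<Rightarrow> real) set" where
  "QS d = PiE {..<d} (\<lambda>_. \<rat>)"

lemma countable_QS: "countable (QS d)"
  unfolding QS_def by (intro countable_PiE) (auto simp: countable_rat)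

lemma mv_diff: "mv d A x i - mv d A y i = mv d A (\<lambda>j. x j - y j) i"
  by (simp add: mv_def sum_subtractf right_diff_distrib)

lemma specnorm_gt_iff:
  assumes d: "0 < d" and t: "0 \<le> t"
  shows "t < specnorm d A \<longleftrightarrow> (\<exists>q\<in>QS d. t * L2_set q {..<d} < L2_set (mv d A q) {..<d})"
proof
  assume "\<exists>q\<in>QS d. t * L2_set q {..<d} < L2_set (mv d A q) {..<d}"
  then obtain q where q: "t * L2_set q {..<d} < L2_set (mv d A q) {..<d}" by blast
  have qpos: "L2_set q {..<d} > 0"
  proof (rule ccontr)
    assume "\<not> L2_set q {..<d} > 0"
    hence "L2_set q {..<d} = 0" using L2_set_nonneg[of q "{..<d}"] by linarith
    thus False using q mv_bound[of d A q] by simp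
  qed
  define x where "x j = (1 / L2_set q {..<d}) * q j" for j
  have x1: "L2_set x {..<d} = 1" unfolding x_def L2_scale using qpos by simp
  have "mv d A x = (\<lambda>i. (1 / L2_set q {..<d}) * mv d A q i)"
    by (auto simp: mv_def x_def sum_distrib_left mult_ac)
  hence "L2_set (mv d A x) {..<d} = L2_set (mv d A q) {..<d} / L2_set q {..<d}"
    using qpos by (simp add: L2_div)
  moreover have "t < L2_set (mv d A q) {..<d} / L2_set q {..<d}"
    using q qpos by (simp add: field_simps)
  ultimately show "t < specnorm d A" using specnorm_ge[OF d x1, of A] by linarith
next
  assume "t < specnorm d A"
  then obtain x where x: "L2_set x {..<d} = 1" and s: "t < L2_set (mv d A x) {..<d}"
    unfolding specnorm_alt less_cSup_iff[OF specset_ne[OF d] specset_bdd] by blast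
  define s where "s = L2_set (mv d A x) {..<d}"
  define F where "F = frob d A"
  have F0: "0 \<le> F" unfolding F_def frob_L2 by simp
  define \<delta> where "\<delta> = (s - t) / (2 * (t + F + 1))"
  have \<delta>p: "\<delta> > 0" unfolding \<delta>_def using s t F0 s_def by simp
  have "\<forall>j. \<exists>r\<in>\<rat>. x j - \<delta> / d < r \<and> r < x j + \<delta> / d"
    using \<delta>p d by (intro allI Rats_dense_in_real) auto
  then obtain r where r: "\<And>j. r j \<in> \<rat> \<and> x j - \<delta> / d < r j \<and> r j < x j + \<delta> / d" by metis
  define q where "q = restrict r {..<d}"
  have qQ: "q \<in> QS d" unfolding QS_def q_def using r by auto
  have close: "L2_set (\<lambda>j. x j - q j) {..<d} < \<delta>"
  proof -
    have "L2_set (\<lambda>j. x j - q j) {..<d} \<le> (\<Sum>j<d. \<bar>x j - q j\<bar>)" by (rule L2_set_le_sum_abs)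
    also have "\<dots> < (\<Sum>j<d. \<delta> / d)"
    proof (intro sum_strict_mono)
      fix j assume "j \<in> {..<d}"
      thus "\<bar>x j - q j\<bar> < \<delta> / real d" using r[of j] by (auto simp: q_def abs_less_iff)
    qed (use d in auto)
    also have "\<dots> = \<delta>" using d by simp
    finally show ?thesis .
  qed
  have qn: "L2_set q {..<d} \<le> 1 + \<delta>"
  proof -
    have "L2_set q {..<d} = L2_set (\<lambda>j. x j + (q j - x j)) {..<d}" by simp
    also have "\<dots> \<le> L2_set x {..<d} + L2_set (\<lambda>j. q j - x j) {..<d}" by (rule L2_set_triangle_ineq)
    also have "L2_set (\<lambda>j. q j - x j) {..<d} = L2_set (\<lambda>j. x j - q j) {..<d}" by (rule L2_minus_comm)
    finally show ?thesis using x close by simp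
  qed
  have Aq: "s - F * \<delta> \<le> L2_set (mv d A q) {..<d}"
  proof -
    have "s = L2_set (\<lambda>i. mv d A q i + mv d A (\<lambda>j. x j - q j) i) {..<d}"
      unfolding s_def by (intro L2_set_cong refl) (metis add_diff_cancel_left' diff_add_cancel mv_diff)
    also have "\<dots> \<le> L2_set (mv d A q) {..<d} + L2_set (mv d A (\<lambda>j. x j - q j)) {..<d}"
      by (rule L2_set_triangle_ineq)
    also have "L2_set (mv d A (\<lambda>j. x j - q j)) {..<d} \<le> F * \<delta>"
      using mv_bound[of d A "\<lambda>j. x j - q j"] close F0 unfolding F_def
      by (smt (verit) mult_left_mono)
    finally show ?thesis by simp
  qed
  have "t * L2_set q {..<d} \<le> t * (1 + \<delta>)" using qn t by (simp add: mult_left_mono)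
  also have "t * (1 + \<delta>) < s - F * \<delta>"
  proof -
    have "\<delta> * (t + F) \<le> \<delta> * (t + F + 1)" using \<delta>p by simp
    also have "\<delta> * (t + F + 1) = (s - t) / 2"
    proof -
      have "t + F + 1 > 0" using t F0 by simp
      thus ?thesis unfolding \<delta>_def by (simp add: field_simps)
    qed
    finally have "\<delta> * (t + F) \<le> (s - t) / 2" .
    thus ?thesis using s s_def by (simp add: algebra_simps)
  qed
  finally show "\<exists>q\<in>QS d. t * L2_set q {..<d} < L2_set (mv d A q) {..<d}"
    using Aq qQ by (meson less_le_trans)
qed

lemma specnorm_measurable:
  assumes d: "0 < d" and meas: "\<And>j k. j < d \<Longrightarrow> k < d \<Longrightarrow> (\<lambda>\<omega>. A \<omega> j k) \<in> borel_measurable M"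
  shows "(\<lambda>\<omega>. specnorm d (A \<omega>)) \<in> borel_measurable M"
  unfolding borel_measurable_iff_greater
proof
  fix t :: real
  show "{w \<in> space M. t < specnorm d (A w)} \<in> sets M"
  proof (cases "t < 0")
    case True
    hence "{w \<in> space M. t < specnorm d (A w)} = space M"
      using specnorm_nonneg[OF d] by (auto intro: less_le_trans)
    thus ?thesis by simp
  next
    case False
    hence t: "0 \<le> t" by simp
    have mq: "(\<lambda>w. L2_set (mv d (A w) q) {..<d}) \<in> borel_measurable M" for q
    proof -
      have "(\<lambda>w. \<Sum>i<d. (\<Sum>j<d. A w i j * q j)\<^sup>2) \<in> borel_measurable M"
      proof (intro borel_measurable_sum borel_measurable_power borel_measurable_times)
        fix i j assume "i \<in> {..<d}" "j \<in> {..<d}"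
        thus "(\<lambda>w. A w i j) \<in> borel_measurable M" using meas by simp
      qed simp
      from measurable_compose[OF this borel_measurable_sqrt]
      show ?thesis unfolding L2_set_def mv_def by simp
    qed
    have "{w \<in> space M. t < specnorm d (A w)}
        = (\<Union>q\<in>QS d. {w \<in> space M. t * L2_set q {..<d} < L2_set (mv d (A w) q) {..<d}})"
      using specnorm_gt_iff[OF d t] by auto
    also have "\<dots> \<in> sets M"
    proof (intro sets.countable_UN'' countable_QS)
      fix q show "{w \<in> space M. t * L2_set q {..<d} < L2_set (mv d (A w) q) {..<d}} \<in> sets M"
        using mq[of q] by measurable
    qed
    finally show ?thesis .
  qed
qed

lemma (in finite_measure) measure_le_subset:
  assumes "B \<in> sets M" "A \<subseteq> B"
  shows "measure M A \<le> measure M B"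
proof (cases "A \<in> sets M")
  case True thus ?thesis using assms by (intro finite_measure_mono) auto
next
  case False thus ?thesis by (simp add: measure_notin_sets)
qed

lemma abs_mult_le_sq: "\<bar>a * b\<bar> \<le> a\<^sup>2 + (b::real)\<^sup>2"
proof -
  have "2 * \<bar>a\<bar> * \<bar>b\<bar> \<le> \<bar>a\<bar>\<^sup>2 + \<bar>b\<bar>\<^sup>2" by (rule sum_squares_bound)
  moreover have "0 \<le> \<bar>a\<bar> * \<bar>b\<bar>" by simp
  moreover have "\<bar>a\<bar>\<^sup>2 = a\<^sup>2" "\<bar>b\<bar>\<^sup>2 = b\<^sup>2" by simp_all
  moreover have "\<bar>a * b\<bar> = \<bar>a\<bar> * \<bar>b\<bar>" by (simp add: abs_mult)
  ultimately show ?thesis by linarith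
qed

lemma sqint_prod:
  fixes f g :: "'a \<Rightarrow> real"
  assumes "integrable M (\<lambda>x. (f x)\<^sup>2)" "integrable M (\<lambda>x. (g x)\<^sup>2)"
    and [measurable]: "f \<in> borel_measurable M" "g \<in> borel_measurable M"
  shows "integrable M (\<lambda>x. f x * g x)"
proof -
  have i: "integrable M (\<lambda>x. (f x)\<^sup>2 + (g x)\<^sup>2)" using assms by simp
  have ae: "AE x in M. norm (f x * g x) \<le> norm ((f x)\<^sup>2 + (g x)\<^sup>2)"
  proof (rule AE_I2)
    fix x
    have "0 \<le> (f x)\<^sup>2 + (g x)\<^sup>2" by simp
    thus "norm (f x * g x) \<le> norm ((f x)\<^sup>2 + (g x)\<^sup>2)" using abs_mult_le_sq[of "f x" "g x"] by simp
  qed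
  have m: "(\<lambda>x. f x * g x) \<in> borel_measurable M" by measurable
  show ?thesis by (rule Bochner_Integration.integrable_bound[OF i m ae])
qed

lemma (in prob_space) var_sum:
  fixes Y :: "'i \<Rightarrow> 'a \<Rightarrow> real"
  assumes fin: "finite I" and ind: "indep_vars (\<lambda>_. borel) Y I"
    and sq: "\<And>i. i \<in> I \<Longrightarrow> integrable M (\<lambda>\<omega>. (Y i \<omega>)\<^sup>2)"
    and me: "\<And>i. i \<in> I \<Longrightarrow> Y i \<in> borel_measurable M"
    and m: "\<And>i. i \<in> I \<Longrightarrow> expectation (Y i) = m"
    and s: "\<And>i. i \<in> I \<Longrightarrow> expectation (\<lambda>\<omega>. (Y i \<omega>)\<^sup>2) = s"
  shows "integrable M (\<lambda>\<omega>. (\<Sum>i\<in>I. Y i \<omega> - m)\<^sup>2)"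
    and "expectation (\<lambda>\<omega>. (\<Sum>i\<in>I. Y i \<omega> - m)\<^sup>2) = real (card I) * (s - m\<^sup>2)"
proof -
  have intY: "integrable M (Y i)" if "i \<in> I" for i
    using square_integrable_imp_integrable[OF me[OF that] sq[OF that]] .
  have Zsq: "integrable M (\<lambda>\<omega>. (Y i \<omega> - m)\<^sup>2)" if "i \<in> I" for i
    using sq[OF that] intY[OF that] unfolding power2_eq_square ring_distribs
    by (intro Bochner_Integration.integrable_diff Bochner_Integration.integrable_add) auto
  have Zme: "(\<lambda>\<omega>. Y i \<omega> - m) \<in> borel_measurable M" if "i \<in> I" for i
    using me[OF that] by measurable
  have Zprod: "integrable M (\<lambda>\<omega>. (Y i \<omega> - m) * (Y l \<omega> - m))" if "i \<in> I" "l \<in> I" for i l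
    by (rule sqint_prod[OF Zsq[OF that(1)] Zsq[OF that(2)] Zme[OF that(1)] Zme[OF that(2)]])
  have sq_eq: "(\<Sum>i\<in>I. Y i \<omega> - m)\<^sup>2 = (\<Sum>i\<in>I. \<Sum>l\<in>I. (Y i \<omega> - m) * (Y l \<omega> - m))" for \<omega>
    by (simp add: power2_eq_square sum_product)
  show int: "integrable M (\<lambda>\<omega>. (\<Sum>i\<in>I. Y i \<omega> - m)\<^sup>2)"
    unfolding sq_eq using Zprod by auto
  have EZ: "expectation (\<lambda>\<omega>. (Y i \<omega> - m) * (Y l \<omega> - m)) = (if i = l then s - m\<^sup>2 else 0)"
    if il: "i \<in> I" "l \<in> I" for i l
  proof (cases "i = l")
    case True
    have "expectation (\<lambda>\<omega>. (Y i \<omega> - m) * (Y i \<omega> - m))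
        = expectation (\<lambda>\<omega>. (Y i \<omega>)\<^sup>2) - 2 * m * expectation (Y i) + m\<^sup>2"
    proof -
      have "(\<lambda>\<omega>. (Y i \<omega> - m) * (Y i \<omega> - m)) = (\<lambda>\<omega>. ((Y i \<omega>)\<^sup>2 - 2 * m * Y i \<omega>) + m\<^sup>2)"
        by (auto simp: fun_eq_iff power2_eq_square algebra_simps)
      thus ?thesis using sq[OF il(1)] intY[OF il(1)] by (simp add: prob_space)
    qed
    thus ?thesis using True m[OF il(1)] s[OF il(1)] by (simp add: power2_eq_square)
  next
    case False
    have ind2: "indep_vars (\<lambda>_. borel) (\<lambda>k \<omega>. Y k \<omega> - m) {i, l}"
      using indep_vars_compose2[OF indep_vars_subset[OF ind, of "{i, l}"], of "\<lambda>k y. y - m" "\<lambda>_. borel"] il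
      by auto
    have "expectation (\<lambda>\<omega>. \<Prod>k\<in>{i, l}. Y k \<omega> - m) = (\<Prod>k\<in>{i, l}. expectation (\<lambda>\<omega>. Y k \<omega> - m))"
      by (rule indep_vars_lebesgue_integral[OF _ ind2]) (use il intY in auto)
    moreover have "expectation (\<lambda>\<omega>. Y k \<omega> - m) = 0" if "k \<in> I" for k
      using intY[OF that] m[OF that] by (simp add: prob_space)
    ultimately show ?thesis using False il by simp
  qed
  have "expectation (\<lambda>\<omega>. (\<Sum>i\<in>I. Y i \<omega> - m)\<^sup>2)
      = (\<Sum>i\<in>I. \<Sum>l\<in>I. expectation (\<lambda>\<omega>. (Y i \<omega> - m) * (Y l \<omega> - m)))"
    unfolding sq_eq using Zprod by (simp add: Bochner_Integration.integral_sum)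
  also have "\<dots> = (\<Sum>i\<in>I. \<Sum>l\<in>I. (if i = l then s - m\<^sup>2 else 0))"
    using EZ by (intro sum.cong refl) auto
  also have "\<dots> = real (card I) * (s - m\<^sup>2)" using fin by (simp add: sum.delta)
  finally show "expectation (\<lambda>\<omega>. (\<Sum>i\<in>I. Y i \<omega> - m)\<^sup>2) = real (card I) * (s - m\<^sup>2)" .
qed

locale smodel = prob_space M for M :: "'a measure" +
  fixes n d :: nat and Xs :: "nat \<Rightarrow> 'a \<Rightarrow> nat \<Rightarrow> real" and Sg :: "nat \<Rightarrow> nat \<Rightarrow> real"
  assumes n_pos: "0 < n"
  and meas: "\<And>i. i < n \<Longrightarrow> (\<lambda>\<omega>. restrict (Xs i \<omega>) {..<d}) \<in> M \<rightarrow>\<^sub>M vecspace d"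
  and indep: "indep_vars (\<lambda>_. vecspace d) (\<lambda>i \<omega>. restrict (Xs i \<omega>) {..<d}) {..<n}"
  and ident: "\<And>i. i < n \<Longrightarrow> distr M (vecspace d) (\<lambda>\<omega>. restrict (Xs i \<omega>) {..<d})
                 = distr M (vecspace d) (\<lambda>\<omega>. restrict (Xs 0 \<omega>) {..<d})"
  and sqint: "\<And>j. j < d \<Longrightarrow> integrable M (\<lambda>\<omega>. (Xs 0 \<omega> j)\<^sup>2)"
  and Sdef: "\<And>j k. j < d \<Longrightarrow> k < d \<Longrightarrow> Sg j k = integral\<^sup>L M (\<lambda>\<omega>. Xs 0 \<omega> j * Xs 0 \<omega> k)"
  and Snz: "\<exists>j<d. \<exists>k<d. Sg j k \<noteq> 0"
begin

abbreviation V where "V i \<omega> \<equiv> restrict (Xs i \<omega>) {..<d}"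

lemma d_pos: "0 < d" using Snz by auto

lemma comp_meas: "i < n \<Longrightarrow> j < d \<Longrightarrow> (\<lambda>\<omega>. Xs i \<omega> j) \<in> borel_measurable M"
  using measurable_compose[OF meas measurable_component_singleton[of j "{..<d}" "\<lambda>_. borel"]] by simp

lemma fun_meas: "g \<in> borel_measurable (vecspace d) \<Longrightarrow> i < n \<Longrightarrow> (\<lambda>\<omega>. g (V i \<omega>)) \<in> borel_measurable M"
  using measurable_compose[OF meas] by blast

lemma transfer_int:
  fixes g :: "(nat \<Rightarrow> real) \<Rightarrow> real"
  assumes g: "g \<in> borel_measurable (vecspace d)" and i: "i < n"
  shows "integral\<^sup>L M (\<lambda>\<omega>. g (V i \<omega>)) = integral\<^sup>L M (\<lambda>\<omega>. g (V 0 \<omega>))"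
  using integral_distr[OF meas[OF i] g] integral_distr[OF meas[OF n_pos] g] ident[OF i] by simp

lemma transfer_integrable:
  fixes g :: "(nat \<Rightarrow> real) \<Rightarrow> real"
  assumes g: "g \<in> borel_measurable (vecspace d)" and i: "i < n"
  shows "integrable M (\<lambda>\<omega>. g (V i \<omega>)) \<longleftrightarrow> integrable M (\<lambda>\<omega>. g (V 0 \<omega>))"
  using integrable_distr_eq[OF meas[OF i] g] integrable_distr_eq[OF meas[OF n_pos] g] ident[OF i] by simp

lemma indep_fun:
  assumes g: "g \<in> borel_measurable (vecspace d)" and I: "I \<subseteq> {..<n}"
  shows "indep_vars (\<lambda>_. borel) (\<lambda>i \<omega>. g (V i \<omega>)) I"
  using indep_vars_compose2[OF indep_vars_subset[OF indep I], of "\<lambda>_. g"] g by simp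

lemma comp_vec_meas: "j < d \<Longrightarrow> (\<lambda>v. v j) \<in> borel_measurable (vecspace d)"
  using measurable_component_singleton[of j "{..<d}" "\<lambda>_. borel"] by simp

definition tv :: "(nat \<Rightarrow> real) \<Rightarrow> real" where "tv v = (\<Sum>j<d. v j * v j)"

lemma tv_meas: "tv \<in> borel_measurable (vecspace d)"
  unfolding tv_def
  by (intro borel_measurable_sum borel_measurable_times comp_vec_meas) auto

lemma tv_V: "tv (V i \<omega>) = vdot d (Xs i \<omega>) (Xs i \<omega>)"
  by (simp add: tv_def vdot_def)

lemma gram_V: "gram d (\<lambda>i. Xs i \<omega>) i i = vdot d (Xs i \<omega>) (Xs i \<omega>)"
  by (simp add: gram_def vdot_def)

lemma Sg_sym: "j < d \<Longrightarrow> k < d \<Longrightarrow> Sg j k = Sg k j"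
  by (simp add: Sdef mult.commute)

lemma f_eq: "fnorm d Sg = sqrt (\<Sum>j<d. \<Sum>k<d. (Sg j k)\<^sup>2)"
  unfolding fnorm_def mtrace_def mmult_def
  by (intro arg_cong[where f=sqrt] sum.cong refl) (simp add: Sg_sym power2_eq_square)

lemma f_pos: "0 < fnorm d Sg"
proof -
  obtain j k where jk: "j < d" "k < d" "Sg j k \<noteq> 0" using Snz by auto
  have "0 < (Sg j k)\<^sup>2" using jk by simp
  also have "(Sg j k)\<^sup>2 \<le> (\<Sum>k<d. (Sg j k)\<^sup>2)" using jk by (intro member_le_sum) auto
  also have "\<dots> \<le> (\<Sum>j<d. \<Sum>k<d. (Sg j k)\<^sup>2)"
    using jk by (intro member_le_sum[of j "{..<d}" "\<lambda>j. \<Sum>k<d. (Sg j k)\<^sup>2"]) (auto intro: sum_nonneg)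
  finally show ?thesis unfolding f_eq by simp
qed

lemma f_sq: "(fnorm d Sg)\<^sup>2 = (\<Sum>j<d. \<Sum>k<d. (Sg j k)\<^sup>2)"
  unfolding f_eq by (simp add: sum_nonneg)

end

lemma int_sum2:
  fixes f :: "'i \<Rightarrow> 'k \<Rightarrow> 'a \<Rightarrow> real"
  assumes "\<And>j k. j \<in> J \<Longrightarrow> k \<in> K \<Longrightarrow> integrable M (f j k)"
  shows "integrable M (\<lambda>x. \<Sum>j\<in>J. \<Sum>k\<in>K. f j k x)"
    and "integral\<^sup>L M (\<lambda>x. \<Sum>j\<in>J. \<Sum>k\<in>K. f j k x) = (\<Sum>j\<in>J. \<Sum>k\<in>K. integral\<^sup>L M (f j k))"
proof -
  have i1: "integrable M (\<lambda>x. \<Sum>k\<in>K. f j k x)" if "j \<in> J" for j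
  proof (intro Bochner_Integration.integrable_sum)
    fix k assume "k \<in> K" thus "integrable M (f j k)" using assms that by blast
  qed
  show "integrable M (\<lambda>x. \<Sum>j\<in>J. \<Sum>k\<in>K. f j k x)"
    by (rule Bochner_Integration.integrable_sum, rule i1)
  have "integral\<^sup>L M (\<lambda>x. \<Sum>j\<in>J. \<Sum>k\<in>K. f j k x) = (\<Sum>j\<in>J. integral\<^sup>L M (\<lambda>x. \<Sum>k\<in>K. f j k x))"
    using i1 by (rule Bochner_Integration.integral_sum)
  also have "\<dots> = (\<Sum>j\<in>J. \<Sum>k\<in>K. integral\<^sup>L M (f j k))"
    using assms by (intro sum.cong refl Bochner_Integration.integral_sum) auto
  finally show "integral\<^sup>L M (\<lambda>x. \<Sum>j\<in>J. \<Sum>k\<in>K. f j k x) = (\<Sum>j\<in>J. \<Sum>k\<in>K. integral\<^sup>L M (f j k))" .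
qed

lemma sq_sum_sq: "(\<Sum>j\<in>J. (a::'b\<Rightarrow>real) j * a j)\<^sup>2 = (\<Sum>j\<in>J. \<Sum>k\<in>J. (a j * a k)\<^sup>2)"
  unfolding power2_eq_square sum_product by (intro sum.cong refl) (simp add: mult_ac)

context smodel begin

definition T0 :: "'a \<Rightarrow> real" where "T0 \<omega> = vdot d (Xs 0 \<omega>) (Xs 0 \<omega>)"

lemma prod_meas: "j < d \<Longrightarrow> k < d \<Longrightarrow> (\<lambda>v. v j * v k) \<in> borel_measurable (vecspace d)"
  by (intro borel_measurable_times comp_vec_meas)

lemma prod_sq_meas: "j < d \<Longrightarrow> k < d \<Longrightarrow> (\<lambda>v. (v j * v k)\<^sup>2) \<in> borel_measurable (vecspace d)"
  by (intro borel_measurable_power prod_meas)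

lemma T0_sq: "(T0 \<omega>)\<^sup>2 = (\<Sum>j<d. \<Sum>k<d. (Xs 0 \<omega> j * Xs 0 \<omega> k)\<^sup>2)"
  unfolding T0_def vdot_def by (rule sq_sum_sq)

lemma T0_meas: "T0 \<in> borel_measurable M"
  unfolding T0_def vdot_def
  by (intro borel_measurable_sum borel_measurable_times comp_meas n_pos) auto

lemma prod_sq_int:
  assumes T2: "integrable M (\<lambda>\<omega>. (T0 \<omega>)\<^sup>2)" and jk: "j < d" "k < d"
  shows "integrable M (\<lambda>\<omega>. (Xs 0 \<omega> j * Xs 0 \<omega> k)\<^sup>2)"
proof -
  have m: "(\<lambda>\<omega>. (Xs 0 \<omega> j * Xs 0 \<omega> k)\<^sup>2) \<in> borel_measurable M"
    using jk by (intro borel_measurable_power borel_measurable_times comp_meas n_pos)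
  have "AE \<omega> in M. norm ((Xs 0 \<omega> j * Xs 0 \<omega> k)\<^sup>2) \<le> norm ((T0 \<omega>)\<^sup>2)"
  proof (rule AE_I2)
    fix \<omega>
    have "(Xs 0 \<omega> j * Xs 0 \<omega> k)\<^sup>2 \<le> (\<Sum>k<d. (Xs 0 \<omega> j * Xs 0 \<omega> k)\<^sup>2)"
      using jk by (intro member_le_sum) auto
    also have "\<dots> \<le> (\<Sum>j<d. \<Sum>k<d. (Xs 0 \<omega> j * Xs 0 \<omega> k)\<^sup>2)"
      using jk by (intro member_le_sum[of j "{..<d}" "\<lambda>j. \<Sum>k<d. (Xs 0 \<omega> j * Xs 0 \<omega> k)\<^sup>2"]) (auto intro: sum_nonneg)
    finally show "norm ((Xs 0 \<omega> j * Xs 0 \<omega> k)\<^sup>2) \<le> norm ((T0 \<omega>)\<^sup>2)" unfolding T0_sq by simp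
  qed
  thus ?thesis by (rule Bochner_Integration.integrable_bound[OF T2 m])
qed

definition Dv :: "'a \<Rightarrow> real" where
  "Dv \<omega> = (\<Sum>j<d. \<Sum>k<d. (sc n (\<lambda>i. Xs i \<omega>) j k - Sg j k)\<^sup>2)"

lemma entry_var:
  assumes T2: "integrable M (\<lambda>\<omega>. (T0 \<omega>)\<^sup>2)" and jk: "j < d" "k < d"
  shows "integrable M (\<lambda>\<omega>. (sc n (\<lambda>i. Xs i \<omega>) j k - Sg j k)\<^sup>2)"
    and "integral\<^sup>L M (\<lambda>\<omega>. (sc n (\<lambda>i. Xs i \<omega>) j k - Sg j k)\<^sup>2)
          \<le> integral\<^sup>L M (\<lambda>\<omega>. (Xs 0 \<omega> j * Xs 0 \<omega> k)\<^sup>2) / real n"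
proof -
  define g where "g v = v j * v k" for v :: "nat \<Rightarrow> real"
  have gm: "g \<in> borel_measurable (vecspace d)" unfolding g_def using prod_meas[OF jk] .
  have g2m: "(\<lambda>v. (g v)\<^sup>2) \<in> borel_measurable (vecspace d)" using gm by measurable
  define Y where "Y i \<omega> = g (V i \<omega>)" for i \<omega>
  have Yeq: "Y i \<omega> = Xs i \<omega> j * Xs i \<omega> k" for i \<omega> using jk by (simp add: Y_def g_def)
  have int0: "integrable M (\<lambda>\<omega>. (g (V 0 \<omega>))\<^sup>2)" using prod_sq_int[OF T2 jk] jk by (simp add: g_def)
  define s where "s = integral\<^sup>L M (\<lambda>\<omega>. (Xs 0 \<omega> j * Xs 0 \<omega> k)\<^sup>2)"
  have vs: "integrable M (\<lambda>\<omega>. (\<Sum>i\<in>{..<n}. Y i \<omega> - Sg j k)\<^sup>2)"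
       "expectation (\<lambda>\<omega>. (\<Sum>i\<in>{..<n}. Y i \<omega> - Sg j k)\<^sup>2) = real (card {..<n}) * (s - (Sg j k)\<^sup>2)"
  proof -
    have ind: "indep_vars (\<lambda>_. borel) Y {..<n}" unfolding Y_def by (rule indep_fun[OF gm]) simp
    have sq: "integrable M (\<lambda>\<omega>. (Y i \<omega>)\<^sup>2)" if "i \<in> {..<n}" for i
      unfolding Y_def using transfer_integrable[OF g2m, of i] that int0 by simp
    have me: "Y i \<in> borel_measurable M" if "i \<in> {..<n}" for i
      unfolding Y_def using fun_meas[OF gm, of i] that by simp
    have m: "expectation (Y i) = Sg j k" if "i \<in> {..<n}" for i
      unfolding Y_def using transfer_int[OF gm, of i] that jk by (simp add: Sdef g_def)
    have s: "expectation (\<lambda>\<omega>. (Y i \<omega>)\<^sup>2) = s" if "i \<in> {..<n}" for i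
      unfolding Y_def using transfer_int[OF g2m, of i] that jk by (simp add: s_def g_def)
    show "integrable M (\<lambda>\<omega>. (\<Sum>i\<in>{..<n}. Y i \<omega> - Sg j k)\<^sup>2)"
       "expectation (\<lambda>\<omega>. (\<Sum>i\<in>{..<n}. Y i \<omega> - Sg j k)\<^sup>2) = real (card {..<n}) * (s - (Sg j k)\<^sup>2)"
      using var_sum[OF _ ind sq me m s] by auto
  qed
  have nr: "real n > 0" using n_pos by simp
  have eq: "(sc n (\<lambda>i. Xs i \<omega>) j k - Sg j k)\<^sup>2 = (\<Sum>i\<in>{..<n}. Y i \<omega> - Sg j k)\<^sup>2 / (real n)\<^sup>2" for \<omega>
  proof -
    have "sc n (\<lambda>i. Xs i \<omega>) j k - Sg j k = (\<Sum>i\<in>{..<n}. Y i \<omega> - Sg j k) / real n"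
      using nr by (simp add: sc_def Yeq sum_subtractf field_simps)
    thus ?thesis by (simp add: power_divide)
  qed
  show "integrable M (\<lambda>\<omega>. (sc n (\<lambda>i. Xs i \<omega>) j k - Sg j k)\<^sup>2)"
    unfolding eq using vs(1) by simp
  have "integral\<^sup>L M (\<lambda>\<omega>. (sc n (\<lambda>i. Xs i \<omega>) j k - Sg j k)\<^sup>2) = real n * (s - (Sg j k)\<^sup>2) / (real n)\<^sup>2"
    unfolding eq using vs(2) by simp
  also have "\<dots> \<le> real n * s / (real n)\<^sup>2"
    using nr by (intro divide_right_mono mult_left_mono) auto
  also have "\<dots> = s / real n" using nr by (simp add: power2_eq_square)
  finally show "integral\<^sup>L M (\<lambda>\<omega>. (sc n (\<lambda>i. Xs i \<omega>) j k - Sg j k)\<^sup>2)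
          \<le> integral\<^sup>L M (\<lambda>\<omega>. (Xs 0 \<omega> j * Xs 0 \<omega> k)\<^sup>2) / real n" unfolding s_def .
qed

lemma Dv_bound:
  assumes T2: "integrable M (\<lambda>\<omega>. (T0 \<omega>)\<^sup>2)"
  shows "integrable M Dv" and "expectation Dv \<le> expectation (\<lambda>\<omega>. (T0 \<omega>)\<^sup>2) / real n"
proof -
  show "integrable M Dv" unfolding Dv_def
    by (intro Bochner_Integration.integrable_sum entry_var(1)[OF T2]) auto
  have "expectation Dv = (\<Sum>j<d. \<Sum>k<d. integral\<^sup>L M (\<lambda>\<omega>. (sc n (\<lambda>i. Xs i \<omega>) j k - Sg j k)\<^sup>2))"
    unfolding Dv_def by (rule int_sum2(2)) (use entry_var(1)[OF T2] in auto)
  also have "\<dots> \<le> (\<Sum>j<d. \<Sum>k<d. integral\<^sup>L M (\<lambda>\<omega>. (Xs 0 \<omega> j * Xs 0 \<omega> k)\<^sup>2) / real n)"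
    using entry_var(2)[OF T2] by (intro sum_mono) auto
  also have "\<dots> = expectation (\<lambda>\<omega>. (T0 \<omega>)\<^sup>2) / real n"
  proof -
    have "expectation (\<lambda>\<omega>. \<Sum>j<d. \<Sum>k<d. (Xs 0 \<omega> j * Xs 0 \<omega> k)\<^sup>2)
        = (\<Sum>j<d. \<Sum>k<d. expectation (\<lambda>\<omega>. (Xs 0 \<omega> j * Xs 0 \<omega> k)\<^sup>2))"
      by (rule int_sum2(2)) (use prod_sq_int[OF T2] in auto)
    thus ?thesis unfolding T0_sq by (simp add: sum_divide_distrib)
  qed
  finally show "expectation Dv \<le> expectation (\<lambda>\<omega>. (T0 \<omega>)\<^sup>2) / real n" .
qed

end

lemma sq_le2: "(a + b)\<^sup>2 \<le> 2 * ((a::real)\<^sup>2 + b\<^sup>2)"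
  using sum_squares_bound[of a b] by (simp add: power2_eq_square algebra_simps)

lemma pow4_bound: "(a + b) ^ 4 \<le> 8 * ((a::real) ^ 4 + b ^ 4)"
proof -
  have "(a + b) ^ 4 = ((a + b)\<^sup>2)\<^sup>2" by simp
  also have "\<dots> \<le> (2 * (a\<^sup>2 + b\<^sup>2))\<^sup>2" by (intro power_mono sq_le2) simp
  also have "\<dots> = 4 * (a\<^sup>2 + b\<^sup>2)\<^sup>2" by (simp only: power_mult_distrib) simp
  also have "(a\<^sup>2 + b\<^sup>2)\<^sup>2 \<le> 2 * ((a\<^sup>2)\<^sup>2 + (b\<^sup>2)\<^sup>2)" by (rule sq_le2)
  finally show ?thesis by simp
qed

lemma sq_sum_prod: "(\<Sum>j\<in>J. (a::'b\<Rightarrow>real) j * b j)\<^sup>2 = (\<Sum>j\<in>J. \<Sum>k\<in>J. (a j * a k) * (b j * b k))"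
  unfolding power2_eq_square sum_product by (intro sum.cong refl) (simp add: mult_ac)

context smodel begin

definition Tn :: "nat \<Rightarrow> 'a \<Rightarrow> real" where "Tn i \<omega> = vdot d (Xs i \<omega>) (Xs i \<omega>)"

lemma Tn_tv: "Tn i \<omega> = tv (V i \<omega>)" by (simp add: Tn_def tv_V)
lemma T0_Tn: "T0 = Tn 0" by (simp add: fun_eq_iff T0_def Tn_def)
lemma Tn_nonneg: "0 \<le> Tn i \<omega>" unfolding Tn_def vdot_def by (simp add: sum_nonneg)
lemma Tn_gram: "gram d (\<lambda>i. Xs i \<omega>) i i = Tn i \<omega>" by (simp add: gram_V Tn_def)

definition f1 where "f1 = mtrace d Sg"
definition ff where "ff = fnorm d Sg"
definition mu where "mu = expectation (\<lambda>\<omega>. (T0 \<omega>)\<^sup>2)"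
definition ET4 where "ET4 = expectation (\<lambda>\<omega>. (T0 \<omega>) ^ 4)"
definition Kq where "Kq = expectation (\<lambda>\<omega>. ((T0 \<omega> - f1) / ff) ^ 4)"

lemma ff_pos: "0 < ff" unfolding ff_def by (rule f_pos)

lemma T0_int: "integrable M T0"
  unfolding T0_def vdot_def using sqint by (intro Bochner_Integration.integrable_sum) (simp add: power2_eq_square)

lemma ET0: "expectation T0 = f1"
proof -
  have "expectation T0 = (\<Sum>j<d. expectation (\<lambda>\<omega>. Xs 0 \<omega> j * Xs 0 \<omega> j))"
    unfolding T0_def vdot_def using sqint by (subst Bochner_Integration.integral_sum) (auto simp: power2_eq_square)
  also have "\<dots> = f1" unfolding f1_def mtrace_def by (intro sum.cong refl) (simp add: Sdef)
  finally show ?thesis .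
qed

lemma mu_ge: assumes T2: "integrable M (\<lambda>\<omega>. (T0 \<omega>)\<^sup>2)" shows "f1\<^sup>2 \<le> mu"
proof -
  have "0 \<le> expectation (\<lambda>\<omega>. (T0 \<omega> - f1)\<^sup>2)" by simp
  also have "expectation (\<lambda>\<omega>. (T0 \<omega> - f1)\<^sup>2) = mu - 2 * f1 * expectation T0 + f1\<^sup>2"
  proof -
    have "(\<lambda>\<omega>. (T0 \<omega> - f1)\<^sup>2) = (\<lambda>\<omega>. ((T0 \<omega>)\<^sup>2 - 2 * f1 * T0 \<omega>) + f1\<^sup>2)"
      by (auto simp: fun_eq_iff power2_eq_square algebra_simps)
    thus ?thesis using T2 T0_int by (simp add: prob_space mu_def)
  qed
  finally show ?thesis using ET0 by (simp add: power2_eq_square)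
qed

lemma mu_nonneg: "0 \<le> mu" unfolding mu_def by simp

lemma T4:
  assumes W4: "integrable M (\<lambda>\<omega>. ((T0 \<omega> - f1) / ff) ^ 4)"
  shows "integrable M (\<lambda>\<omega>. (T0 \<omega>) ^ 4)" and "ET4 \<le> 8 * f1 ^ 4 + 8 * ff ^ 4 * Kq"
proof -
  have fp: "0 < ff" by (rule ff_pos)
  have pt: "(T0 \<omega>) ^ 4 \<le> 8 * f1 ^ 4 + 8 * ff ^ 4 * ((T0 \<omega> - f1) / ff) ^ 4" for \<omega>
  proof -
    define w where "w = (T0 \<omega> - f1) / ff"
    have "T0 \<omega> = f1 + ff * w" using fp by (simp add: w_def)
    hence "(T0 \<omega>) ^ 4 = (f1 + ff * w) ^ 4" by simp
    also have "\<dots> \<le> 8 * (f1 ^ 4 + (ff * w) ^ 4)" by (rule pow4_bound)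
    also have "(ff * w) ^ 4 = ff ^ 4 * w ^ 4" by (simp only: power_mult_distrib)
    finally show ?thesis unfolding w_def by (simp add: algebra_simps)
  qed
  have bi: "integrable M (\<lambda>\<omega>. 8 * f1 ^ 4 + 8 * ff ^ 4 * ((T0 \<omega> - f1) / ff) ^ 4)"
    using W4 by simp
  have m: "(\<lambda>\<omega>. (T0 \<omega>) ^ 4) \<in> borel_measurable M" using T0_meas by measurable
  have ae: "AE \<omega> in M. norm ((T0 \<omega>) ^ 4) \<le> norm (8 * f1 ^ 4 + 8 * ff ^ 4 * ((T0 \<omega> - f1) / ff) ^ 4)"
  proof (rule AE_I2)
    fix \<omega>
    have "0 \<le> (T0 \<omega>) ^ 4" by simp
    thus "norm ((T0 \<omega>) ^ 4) \<le> norm (8 * f1 ^ 4 + 8 * ff ^ 4 * ((T0 \<omega> - f1) / ff) ^ 4)"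
      using pt[of \<omega>] by simp
  qed
  show i4: "integrable M (\<lambda>\<omega>. (T0 \<omega>) ^ 4)" by (rule Bochner_Integration.integrable_bound[OF bi m ae])
  have "ET4 \<le> expectation (\<lambda>\<omega>. 8 * f1 ^ 4 + 8 * ff ^ 4 * ((T0 \<omega> - f1) / ff) ^ 4)"
    unfolding ET4_def using i4 bi pt by (intro integral_mono) auto
  also have "\<dots> = 8 * f1 ^ 4 + 8 * ff ^ 4 * Kq" using W4 by (simp add: Kq_def prob_space)
  finally show "ET4 \<le> 8 * f1 ^ 4 + 8 * ff ^ 4 * Kq" .
qed

lemma Tn_meas: assumes "i < n" shows "Tn i \<in> borel_measurable M"
  unfolding Tn_tv using fun_meas[OF tv_meas assms] by simp

lemma Tn_moments:
  assumes T2: "integrable M (\<lambda>\<omega>. (T0 \<omega>)\<^sup>2)" and T4i: "integrable M (\<lambda>\<omega>. (T0 \<omega>) ^ 4)" and i: "i < n"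
  shows "integrable M (\<lambda>\<omega>. (Tn i \<omega>)\<^sup>2)" "integrable M (\<lambda>\<omega>. (Tn i \<omega>) ^ 4)"
    "expectation (\<lambda>\<omega>. (Tn i \<omega>)\<^sup>2) = mu" "expectation (\<lambda>\<omega>. (Tn i \<omega>) ^ 4) = ET4"
proof -
  have m2: "(\<lambda>v. (tv v)\<^sup>2) \<in> borel_measurable (vecspace d)" using tv_meas by measurable
  have m4: "(\<lambda>v. (tv v) ^ 4) \<in> borel_measurable (vecspace d)" using tv_meas by measurable
  show "integrable M (\<lambda>\<omega>. (Tn i \<omega>)\<^sup>2)"
    using transfer_integrable[OF m2 i] T2 unfolding Tn_tv T0_Tn by simp
  show "integrable M (\<lambda>\<omega>. (Tn i \<omega>) ^ 4)"
    using transfer_integrable[OF m4 i] T4i unfolding Tn_tv T0_Tn by simp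
  show "expectation (\<lambda>\<omega>. (Tn i \<omega>)\<^sup>2) = mu"
    using transfer_int[OF m2 i] unfolding mu_def Tn_tv T0_Tn by simp
  show "expectation (\<lambda>\<omega>. (Tn i \<omega>) ^ 4) = ET4"
    using transfer_int[OF m4 i] unfolding ET4_def Tn_tv T0_Tn by simp
qed

lemma Zvar:
  assumes T2: "integrable M (\<lambda>\<omega>. (T0 \<omega>)\<^sup>2)" and T4i: "integrable M (\<lambda>\<omega>. (T0 \<omega>) ^ 4)"
  shows "integrable M (\<lambda>\<omega>. (\<Sum>i<n. (Tn i \<omega>)\<^sup>2 - mu)\<^sup>2)"
    "expectation (\<lambda>\<omega>. (\<Sum>i<n. (Tn i \<omega>)\<^sup>2 - mu)\<^sup>2) \<le> real n * ET4"
proof -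
  have m2: "(\<lambda>v. (tv v)\<^sup>2) \<in> borel_measurable (vecspace d)" using tv_meas by measurable
  have ind: "indep_vars (\<lambda>_. borel) (\<lambda>i \<omega>. (Tn i \<omega>)\<^sup>2) {..<n}"
    unfolding Tn_tv by (rule indep_fun[OF m2]) simp
  have sq: "integrable M (\<lambda>\<omega>. ((Tn i \<omega>)\<^sup>2)\<^sup>2)" if "i \<in> {..<n}" for i
    using Tn_moments(2)[OF T2 T4i, of i] that by simp
  have me: "(\<lambda>\<omega>. (Tn i \<omega>)\<^sup>2) \<in> borel_measurable M" if "i \<in> {..<n}" for i
  proof -
    have "Tn i \<in> borel_measurable M" using Tn_meas[of i] that by simp
    thus ?thesis by measurable
  qed
  have m: "expectation (\<lambda>\<omega>. (Tn i \<omega>)\<^sup>2) = mu" if "i \<in> {..<n}" for i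
    using Tn_moments(3)[OF T2 T4i, of i] that by simp
  have s: "expectation (\<lambda>\<omega>. ((Tn i \<omega>)\<^sup>2)\<^sup>2) = ET4" if "i \<in> {..<n}" for i
    using Tn_moments(4)[OF T2 T4i, of i] that by simp
  note vs = var_sum[OF _ ind sq me m s]
  show "integrable M (\<lambda>\<omega>. (\<Sum>i<n. (Tn i \<omega>)\<^sup>2 - mu)\<^sup>2)" using vs(1) by simp
  have "expectation (\<lambda>\<omega>. (\<Sum>i<n. (Tn i \<omega>)\<^sup>2 - mu)\<^sup>2) = real n * (ET4 - mu\<^sup>2)" using vs(2) by simp
  also have "\<dots> \<le> real n * ET4" by (simp add: mult_left_mono)
  finally show "expectation (\<lambda>\<omega>. (\<Sum>i<n. (Tn i \<omega>)\<^sup>2 - mu)\<^sup>2) \<le> real n * ET4" .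
qed

end

context smodel begin

definition Gm :: "nat \<Rightarrow> nat \<Rightarrow> 'a \<Rightarrow> real" where "Gm i l \<omega> = gram d (\<lambda>i. Xs i \<omega>) i l"
definition offF :: "'a \<Rightarrow> real" where
  "offF \<omega> = (\<Sum>i<n. \<Sum>l<n. if i = l then 0 else (Gm i l \<omega>)\<^sup>2)"

lemma g_int:
  assumes jk: "j < d" "k < d" and m: "m < n"
  shows "integrable M (\<lambda>\<omega>. Xs m \<omega> j * Xs m \<omega> k)"
    "expectation (\<lambda>\<omega>. Xs m \<omega> j * Xs m \<omega> k) = Sg j k"
proof -
  have i0: "integrable M (\<lambda>\<omega>. Xs 0 \<omega> j * Xs 0 \<omega> k)"
    by (rule sqint_prod[OF sqint[OF jk(1)] sqint[OF jk(2)] comp_meas[OF n_pos jk(1)] comp_meas[OF n_pos jk(2)]])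
  show "integrable M (\<lambda>\<omega>. Xs m \<omega> j * Xs m \<omega> k)"
    using transfer_integrable[OF prod_meas[OF jk] m] i0 jk by simp
  show "expectation (\<lambda>\<omega>. Xs m \<omega> j * Xs m \<omega> k) = Sg j k"
    using transfer_int[OF prod_meas[OF jk] m] jk by (simp add: Sdef)
qed

lemma Gm_sq_eq: "(Gm i l \<omega>)\<^sup>2 = (\<Sum>j<d. \<Sum>k<d. (Xs i \<omega> j * Xs i \<omega> k) * (Xs l \<omega> j * Xs l \<omega> k))"
  unfolding Gm_def gram_def by (rule sq_sum_prod)

lemma Gm_moment:
  assumes i: "i < n" and l: "l < n" and il: "i \<noteq> l"
  shows "integrable M (\<lambda>\<omega>. (Gm i l \<omega>)\<^sup>2)" "expectation (\<lambda>\<omega>. (Gm i l \<omega>)\<^sup>2) = ff\<^sup>2"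
proof -
  have T: "integrable M (\<lambda>\<omega>. (Xs i \<omega> j * Xs i \<omega> k) * (Xs l \<omega> j * Xs l \<omega> k))"
    "expectation (\<lambda>\<omega>. (Xs i \<omega> j * Xs i \<omega> k) * (Xs l \<omega> j * Xs l \<omega> k)) = (Sg j k)\<^sup>2"
    if jk: "j \<in> {..<d}" "k \<in> {..<d}" for j k
  proof -
    have jk': "j < d" "k < d" using jk by auto
    have ind: "indep_vars (\<lambda>_. borel) (\<lambda>m \<omega>. V m \<omega> j * V m \<omega> k) {i, l}"
      using indep_fun[OF prod_meas[OF jk'], of "{i, l}"] i l by simp
    have intm: "integrable M (\<lambda>\<omega>. V m \<omega> j * V m \<omega> k)" if "m \<in> {i, l}" for m
      using g_int(1)[OF jk'] that i l jk' by auto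
    have "expectation (\<lambda>\<omega>. \<Prod>m\<in>{i, l}. V m \<omega> j * V m \<omega> k) = (\<Prod>m\<in>{i, l}. expectation (\<lambda>\<omega>. V m \<omega> j * V m \<omega> k))"
      by (rule indep_vars_lebesgue_integral[OF _ ind intm]) auto
    moreover have "integrable M (\<lambda>\<omega>. \<Prod>m\<in>{i, l}. V m \<omega> j * V m \<omega> k)"
      by (rule indep_vars_integrable[OF _ ind intm]) auto
    ultimately show "integrable M (\<lambda>\<omega>. (Xs i \<omega> j * Xs i \<omega> k) * (Xs l \<omega> j * Xs l \<omega> k))"
      "expectation (\<lambda>\<omega>. (Xs i \<omega> j * Xs i \<omega> k) * (Xs l \<omega> j * Xs l \<omega> k)) = (Sg j k)\<^sup>2"
      using il jk' g_int(2)[OF jk' i] g_int(2)[OF jk' l] by (simp_all add: power2_eq_square)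
  qed
  show "integrable M (\<lambda>\<omega>. (Gm i l \<omega>)\<^sup>2)" unfolding Gm_sq_eq by (rule int_sum2(1)) (rule T(1))
  have "expectation (\<lambda>\<omega>. (Gm i l \<omega>)\<^sup>2) = (\<Sum>j<d. \<Sum>k<d. (Sg j k)\<^sup>2)"
  proof -
    have "expectation (\<lambda>\<omega>. (Gm i l \<omega>)\<^sup>2) = (\<Sum>j<d. \<Sum>k<d. expectation (\<lambda>\<omega>. (Xs i \<omega> j * Xs i \<omega> k) * (Xs l \<omega> j * Xs l \<omega> k)))"
      unfolding Gm_sq_eq by (rule int_sum2(2)) (rule T(1))
    also have "\<dots> = (\<Sum>j<d. \<Sum>k<d. (Sg j k)\<^sup>2)" using T(2) by (intro sum.cong refl) auto
    finally show ?thesis .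
  qed
  thus "expectation (\<lambda>\<omega>. (Gm i l \<omega>)\<^sup>2) = ff\<^sup>2" unfolding ff_def f_sq .
qed

lemma offF_moment:
  shows "integrable M offF" "expectation offF \<le> (real n)\<^sup>2 * ff\<^sup>2"
proof -
  have T: "integrable M (\<lambda>\<omega>. if i = l then 0 else (Gm i l \<omega>)\<^sup>2)" if "i \<in> {..<n}" "l \<in> {..<n}" for i l
    using Gm_moment(1)[of i l] that by (cases "i = l") auto
  show "integrable M offF" unfolding offF_def by (rule int_sum2(1)) (rule T)
  have "expectation offF = (\<Sum>i<n. \<Sum>l<n. expectation (\<lambda>\<omega>. if i = l then 0 else (Gm i l \<omega>)\<^sup>2))"
    unfolding offF_def by (rule int_sum2(2)) (rule T)
  also have "\<dots> \<le> (\<Sum>i<n. \<Sum>l<n. ff\<^sup>2)"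
  proof (intro sum_mono)
    fix i l assume "i \<in> {..<n}" "l \<in> {..<n}"
    thus "expectation (\<lambda>\<omega>. if i = l then 0 else (Gm i l \<omega>)\<^sup>2) \<le> ff\<^sup>2"
      using Gm_moment(2)[of i l] by (cases "i = l") auto
  qed
  also have "\<dots> = (real n)\<^sup>2 * ff\<^sup>2" by (simp add: power2_eq_square)
  finally show "expectation offF \<le> (real n)\<^sup>2 * ff\<^sup>2" .
qed

lemma Gm_meas: "i < n \<Longrightarrow> l < n \<Longrightarrow> Gm i l \<in> borel_measurable M"
  unfolding Gm_def gram_def
  by (intro borel_measurable_sum borel_measurable_times comp_meas) auto

lemma offF_meas: "offF \<in> borel_measurable M"
  unfolding offF_def
proof (intro borel_measurable_sum)
  fix i l assume "i \<in> {..<n}" "l \<in> {..<n}"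
  thus "(\<lambda>\<omega>. if i = l then 0 else (Gm i l \<omega>)\<^sup>2) \<in> borel_measurable M"
    using Gm_meas[of i l] by (cases "i = l") auto
qed

lemma offF_nonneg: "0 \<le> offF \<omega>" unfolding offF_def by (intro sum_nonneg) auto

end

context smodel begin

lemma Markov:
  assumes "integrable M u" "u \<in> borel_measurable M" "\<And>\<omega>. 0 \<le> u \<omega>" "0 < c"
  shows "measure M {\<omega> \<in> space M. c \<le> u \<omega>} \<le> expectation u / c"
  using integral_Markov_inequality_measure[OF assms(1) sets.top, of c] assms by auto

lemma part2_core:
  assumes T2: "integrable M (\<lambda>\<omega>. (T0 \<omega>)\<^sup>2)" and T4i: "integrable M (\<lambda>\<omega>. (T0 \<omega>) ^ 4)"
    and mup: "0 < mu" and eps: "0 < \<epsilon>"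
  shows "\<exists>E\<in>sets M. measure M E \<le> 4 * ET4 / (real n * mu\<^sup>2) + 324 * ET4 / (\<epsilon> ^ 4 * real n * mu\<^sup>2)
             + 18 * real n * ff\<^sup>2 / (\<epsilon>\<^sup>2 * mu)
           \<and> (\<forall>\<omega>\<in>space M - E. specnorm d (\<lambda>j k. sc n (\<lambda>i. Xs i \<omega>) j k / fnorm d (sc n (\<lambda>i. Xs i \<omega>))) \<le> \<epsilon>)"
proof -
  have nr: "0 < real n" using n_pos by simp
  define c where "c = real n * mu / 2"
  have cp: "0 < c" unfolding c_def using nr mup by simp
  define \<beta> where "\<beta> = \<epsilon> * sqrt c / 3"
  have bp: "0 < \<beta>" unfolding \<beta>_def using eps cp by simp
  define Z where "Z \<omega> = (\<Sum>i<n. (Tn i \<omega>)\<^sup>2 - mu)" for \<omega>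
  define E1 where "E1 = {\<omega> \<in> space M. c\<^sup>2 \<le> (Z \<omega>)\<^sup>2}"
  define E2 where "E2 = (\<Union>i\<in>{..<n}. {\<omega> \<in> space M. \<beta> ^ 4 \<le> (Tn i \<omega>) ^ 4})"
  define E3 where "E3 = {\<omega> \<in> space M. \<beta>\<^sup>2 \<le> offF \<omega>}"
  have Zm: "(\<lambda>\<omega>. (Z \<omega>)\<^sup>2) \<in> borel_measurable M"
  proof -
    have "(\<lambda>\<omega>. Z \<omega>) \<in> borel_measurable M" unfolding Z_def
      by (intro borel_measurable_sum borel_measurable_diff borel_measurable_power Tn_meas) auto
    thus ?thesis by measurable
  qed
  have T4m: "(\<lambda>\<omega>. (Tn i \<omega>) ^ 4) \<in> borel_measurable M" if "i < n" for i
    using Tn_meas[OF that] by measurable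
  have E1s: "E1 \<in> sets M" unfolding E1_def using Zm by measurable
  have E2s: "E2 \<in> sets M" unfolding E2_def using T4m by (intro sets.finite_UN) (auto, measurable)
  have E3s: "E3 \<in> sets M" unfolding E3_def using offF_meas by measurable
  have P1: "measure M E1 \<le> 4 * ET4 / (real n * mu\<^sup>2)"
  proof -
    have "measure M E1 \<le> expectation (\<lambda>\<omega>. (Z \<omega>)\<^sup>2) / c\<^sup>2"
      unfolding E1_def using Zvar(1)[OF T2 T4i] Zm cp by (intro Markov) (auto simp: Z_def)
    also have "\<dots> \<le> real n * ET4 / c\<^sup>2"
      using Zvar(2)[OF T2 T4i] cp by (intro divide_right_mono) (auto simp: Z_def)
    also have "\<dots> = 4 * ET4 / (real n * mu\<^sup>2)"
      unfolding c_def using nr mup by (simp add: field_simps power2_eq_square)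
    finally show ?thesis .
  qed
  have P2: "measure M E2 \<le> 324 * ET4 / (\<epsilon> ^ 4 * real n * mu\<^sup>2)"
  proof -
    have "measure M E2 \<le> (\<Sum>i\<in>{..<n}. measure M {\<omega> \<in> space M. \<beta> ^ 4 \<le> (Tn i \<omega>) ^ 4})"
      unfolding E2_def using T4m by (intro measure_UNION_le) (auto, measurable)
    also have "\<dots> \<le> (\<Sum>i\<in>{..<n}. ET4 / \<beta> ^ 4)"
    proof (intro sum_mono)
      fix i assume i: "i \<in> {..<n}"
      show "measure M {\<omega> \<in> space M. \<beta> ^ 4 \<le> (Tn i \<omega>) ^ 4} \<le> ET4 / \<beta> ^ 4"
        using Markov[OF Tn_moments(2)[OF T2 T4i] T4m, of i "\<beta> ^ 4"] Tn_moments(4)[OF T2 T4i, of i] i bp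
        by (auto simp: Tn_nonneg)
    qed
    also have "\<dots> = real n * ET4 / \<beta> ^ 4" by simp
    also have "\<dots> = 324 * ET4 / (\<epsilon> ^ 4 * real n * mu\<^sup>2)"
    proof -
      have s4: "(sqrt c) ^ 4 = c\<^sup>2"
      proof -
        have "(sqrt c) ^ 4 = ((sqrt c)\<^sup>2)\<^sup>2" by simp
        also have "\<dots> = c\<^sup>2" using cp by simp
        finally show ?thesis .
      qed
      have "\<beta> ^ 4 = \<epsilon> ^ 4 * (sqrt c) ^ 4 / 81" unfolding \<beta>_def
        by (simp add: power_mult_distrib power_divide)
      hence b4: "\<beta> ^ 4 = \<epsilon> ^ 4 * c\<^sup>2 / 81" unfolding s4 .
      show ?thesis unfolding b4 c_def using nr mup eps by (simp add: field_simps power2_eq_square)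
    qed
    finally show ?thesis .
  qed
  have P3: "measure M E3 \<le> 18 * real n * ff\<^sup>2 / (\<epsilon>\<^sup>2 * mu)"
  proof -
    have "measure M E3 \<le> expectation offF / \<beta>\<^sup>2"
      unfolding E3_def using offF_moment(1) offF_meas offF_nonneg bp by (intro Markov) auto
    also have "\<dots> \<le> (real n)\<^sup>2 * ff\<^sup>2 / \<beta>\<^sup>2"
      using offF_moment(2) bp by (intro divide_right_mono) auto
    also have "\<dots> = 18 * real n * ff\<^sup>2 / (\<epsilon>\<^sup>2 * mu)"
    proof -
      have b2: "\<beta>\<^sup>2 = \<epsilon>\<^sup>2 * c / 9" unfolding \<beta>_def using cp by (simp add: power_mult_distrib power_divide)
      show ?thesis unfolding b2 c_def using nr mup eps by (simp add: field_simps power2_eq_square)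
    qed
    finally show ?thesis .
  qed
  define E where "E = E1 \<union> E2 \<union> E3"
  have Es: "E \<in> sets M" unfolding E_def using E1s E2s E3s by auto
  have "measure M E \<le> measure M E1 + measure M E2 + measure M E3"
    unfolding E_def using E1s E2s E3s
    by (meson add_right_mono measure_Un_le order_trans sets.Un)
  hence PE: "measure M E \<le> 4 * ET4 / (real n * mu\<^sup>2) + 324 * ET4 / (\<epsilon> ^ 4 * real n * mu\<^sup>2)
             + 18 * real n * ff\<^sup>2 / (\<epsilon>\<^sup>2 * mu)" using P1 P2 P3 by linarith
  have good: "specnorm d (\<lambda>j k. sc n (\<lambda>i. Xs i \<omega>) j k / fnorm d (sc n (\<lambda>i. Xs i \<omega>))) \<le> \<epsilon>"
    if w: "\<omega> \<in> space M - E" for \<omega>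
  proof -
    have z: "(Z \<omega>)\<^sup>2 < c\<^sup>2" using w unfolding E_def E1_def by auto
    have "\<bar>Z \<omega>\<bar> < c" using z cp by (simp add: power2_less_imp_less abs_less_iff power_mono_iff)
    hence "\<bar>(\<Sum>i<n. (Tn i \<omega>)\<^sup>2) - real n * mu\<bar> < real n * mu / 2"
      unfolding Z_def sum_subtractf c_def by simp
    hence "c \<le> (\<Sum>i<n. (Tn i \<omega>)\<^sup>2)" unfolding c_def by linarith
    hence Q: "c \<le> (\<Sum>i<n. (gram d (\<lambda>i. Xs i \<omega>) i i)\<^sup>2)" unfolding Tn_gram .
    have a: "gram d (\<lambda>i. Xs i \<omega>) i i \<le> \<beta>" if i: "i < n" for i
    proof -
      have "\<not> \<beta> ^ 4 \<le> (Tn i \<omega>) ^ 4" using w i unfolding E_def E2_def by auto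
      hence "(Tn i \<omega>) ^ 4 < \<beta> ^ 4" by linarith
      hence "Tn i \<omega> < \<beta>" using bp by (meson power_less_imp_less_base less_le)
      thus ?thesis unfolding Tn_gram by simp
    qed
    have b: "(\<Sum>i<n. \<Sum>l<n. if i = l then 0 else (gram d (\<lambda>i. Xs i \<omega>) i l)\<^sup>2) \<le> \<beta>\<^sup>2"
      using w unfolding E_def E3_def offF_def Gm_def by auto
    have "specnorm d (\<lambda>j k. sc n (\<lambda>i. Xs i \<omega>) j k / fnorm d (sc n (\<lambda>i. Xs i \<omega>))) \<le> (\<beta> + \<beta>) / sqrt c"
      by (rule specnorm_scaled_bound[OF n_pos d_pos Q cp a b]) (use bp in auto)
    also have "\<dots> = 2 * \<epsilon> / 3" unfolding \<beta>_def using cp by simp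
    also have "\<dots> \<le> \<epsilon>" using eps by simp
    finally show ?thesis .
  qed
  show ?thesis using Es PE good by blast
qed

end

context smodel begin

lemma sc_meas: "j < d \<Longrightarrow> k < d \<Longrightarrow> (\<lambda>\<omega>. sc n (\<lambda>i. Xs i \<omega>) j k) \<in> borel_measurable M"
  unfolding sc_def by (intro borel_measurable_divide borel_measurable_sum borel_measurable_times comp_meas) auto

lemma fsc_meas: "(\<lambda>\<omega>. fnorm d (sc n (\<lambda>i. Xs i \<omega>))) \<in> borel_measurable M"
proof -
  have "(\<lambda>\<omega>. mtrace d (mmult d (sc n (\<lambda>i. Xs i \<omega>)) (sc n (\<lambda>i. Xs i \<omega>)))) \<in> borel_measurable M"
    unfolding mtrace_def mmult_def
    by (intro borel_measurable_sum borel_measurable_times sc_meas) auto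
  from measurable_compose[OF this borel_measurable_sqrt] show ?thesis unfolding fnorm_def by simp
qed

lemma nd_eq: "norm_diff d n Xs Sg \<omega> = (\<lambda>j k. sc n (\<lambda>i. Xs i \<omega>) j k / fnorm d (sc n (\<lambda>i. Xs i \<omega>)) - Sg j k / fnorm d Sg)"
  by (simp add: fun_eq_iff norm_diff_def sample_cov_sc)

lemma nd_meas: "(\<lambda>\<omega>. specnorm d (norm_diff d n Xs Sg \<omega>)) \<in> borel_measurable M"
  unfolding nd_eq
proof (rule specnorm_measurable[OF d_pos])
  fix j k assume "j < d" "k < d"
  thus "(\<lambda>\<omega>. sc n (\<lambda>i. Xs i \<omega>) j k / fnorm d (sc n (\<lambda>i. Xs i \<omega>)) - Sg j k / fnorm d Sg) \<in> borel_measurable M"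
    using sc_meas fsc_meas by measurable
qed

lemma Dv_meas: "Dv \<in> borel_measurable M"
  unfolding Dv_def by (intro borel_measurable_sum borel_measurable_power borel_measurable_diff sc_meas) auto

lemma Dv_nonneg: "0 \<le> Dv \<omega>" unfolding Dv_def by (intro sum_nonneg) auto

lemma frob_nd: "(frob d (norm_diff d n Xs Sg \<omega>))\<^sup>2 \<le> 4 * Dv \<omega> / ff\<^sup>2"
proof -
  have "frob d (norm_diff d n Xs Sg \<omega>) \<le> 2 * frob d (\<lambda>j k. sc n (\<lambda>i. Xs i \<omega>) j k - Sg j k) / ff"
    unfolding nd_eq ff_def by (rule frob_normdiff) (use Sg_sym f_pos in auto)
  moreover have "frob d (\<lambda>j k. sc n (\<lambda>i. Xs i \<omega>) j k - Sg j k) = sqrt (Dv \<omega>)"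
    unfolding frob_def Dv_def ..
  ultimately have "frob d (norm_diff d n Xs Sg \<omega>) \<le> 2 * sqrt (Dv \<omega>) / ff" by simp
  moreover have "0 \<le> frob d (norm_diff d n Xs Sg \<omega>)" unfolding frob_L2 by simp
  ultimately have "(frob d (norm_diff d n Xs Sg \<omega>))\<^sup>2 \<le> (2 * sqrt (Dv \<omega>) / ff)\<^sup>2"
    by (intro power_mono) auto
  also have "\<dots> = 4 * Dv \<omega> / ff\<^sup>2" using Dv_nonneg[of \<omega>] by (simp add: power_divide power_mult_distrib)
  finally show ?thesis .
qed

lemma part1_final:
  assumes T2: "integrable M (\<lambda>\<omega>. (T0 \<omega>)\<^sup>2)"
  shows "expectation (\<lambda>\<omega>. (frob d (norm_diff d n Xs Sg \<omega>))\<^sup>2) \<le> 4 * mu / (real n * ff\<^sup>2)"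
    and "\<And>e. 0 < e \<Longrightarrow> measure M {\<omega> \<in> space M. e < \<bar>specnorm d (norm_diff d n Xs Sg \<omega>)\<bar>} \<le> 4 * mu / (real n * ff\<^sup>2 * e\<^sup>2)"
proof -
  have nr: "0 < real n" using n_pos by simp
  have fp: "0 < ff" by (rule ff_pos)
  have iD: "integrable M (\<lambda>\<omega>. 4 * Dv \<omega> / ff\<^sup>2)" using Dv_bound(1)[OF T2] by simp
  have ED: "expectation (\<lambda>\<omega>. 4 * Dv \<omega> / ff\<^sup>2) \<le> 4 * mu / (real n * ff\<^sup>2)"
  proof -
    have "expectation (\<lambda>\<omega>. 4 * Dv \<omega> / ff\<^sup>2) = 4 * expectation Dv / ff\<^sup>2" by simp
    also have "\<dots> \<le> 4 * (mu / real n) / ff\<^sup>2"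
      using Dv_bound(2)[OF T2] fp unfolding mu_def by (intro divide_right_mono mult_left_mono) auto
    also have "\<dots> = 4 * mu / (real n * ff\<^sup>2)" by simp
    finally show ?thesis .
  qed
  show "expectation (\<lambda>\<omega>. (frob d (norm_diff d n Xs Sg \<omega>))\<^sup>2) \<le> 4 * mu / (real n * ff\<^sup>2)"
  proof -
    have "expectation (\<lambda>\<omega>. (frob d (norm_diff d n Xs Sg \<omega>))\<^sup>2) \<le> expectation (\<lambda>\<omega>. 4 * Dv \<omega> / ff\<^sup>2)"
      by (rule integral_mono_AE'[OF iD]) (use frob_nd Dv_nonneg fp in auto)
    thus ?thesis using ED by linarith
  qed
  fix e :: real assume e: "0 < e"
  have sub: "{\<omega> \<in> space M. e < \<bar>specnorm d (norm_diff d n Xs Sg \<omega>)\<bar>} \<subseteq> {\<omega> \<in> space M. e\<^sup>2 \<le> 4 * Dv \<omega> / ff\<^sup>2}"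
  proof safe
    fix \<omega> assume w: "\<omega> \<in> space M" "e < \<bar>specnorm d (norm_diff d n Xs Sg \<omega>)\<bar>"
    have s0: "0 \<le> specnorm d (norm_diff d n Xs Sg \<omega>)" by (rule specnorm_nonneg[OF d_pos])
    have "specnorm d (norm_diff d n Xs Sg \<omega>) \<le> frob d (norm_diff d n Xs Sg \<omega>)" by (rule specnorm_le_frob[OF d_pos])
    hence "e < frob d (norm_diff d n Xs Sg \<omega>)" using w s0 by simp
    hence "e\<^sup>2 \<le> (frob d (norm_diff d n Xs Sg \<omega>))\<^sup>2" using e by (intro power_mono) auto
    thus "e\<^sup>2 \<le> 4 * Dv \<omega> / ff\<^sup>2" using frob_nd[of \<omega>] by linarith
  qed
  have meas: "{\<omega> \<in> space M. e\<^sup>2 \<le> 4 * Dv \<omega> / ff\<^sup>2} \<in> sets M" using Dv_meas by measurable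
  have "measure M {\<omega> \<in> space M. e < \<bar>specnorm d (norm_diff d n Xs Sg \<omega>)\<bar>} \<le> measure M {\<omega> \<in> space M. e\<^sup>2 \<le> 4 * Dv \<omega> / ff\<^sup>2}"
    by (rule measure_le_subset[OF meas sub])
  also have "\<dots> \<le> expectation (\<lambda>\<omega>. 4 * Dv \<omega> / ff\<^sup>2) / e\<^sup>2"
    using iD Dv_meas Dv_nonneg e fp by (intro Markov) auto
  also have "\<dots> \<le> (4 * mu / (real n * ff\<^sup>2)) / e\<^sup>2" using ED e by (intro divide_right_mono) auto
  also have "\<dots> = 4 * mu / (real n * ff\<^sup>2 * e\<^sup>2)" by simp
  finally show "measure M {\<omega> \<in> space M. e < \<bar>specnorm d (norm_diff d n Xs Sg \<omega>)\<bar>} \<le> 4 * mu / (real n * ff\<^sup>2 * e\<^sup>2)" .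
qed

end

lemma model_smodel:
  assumes "iid_model M p X S" "0 < n"
  shows "smodel (M n) n (p n) (X n) (S n)"
proof -
  note h = assms(1)[unfolded iid_model_def, rule_format, OF assms(2)]
  show ?thesis unfolding smodel_def smodel_axioms_def
    using h assms(2) by (elim conjE) (intro conjI allI impI; blast)
qed

lemma specnorm_div:
  assumes d: "0 < d" and f: "0 < f"
  shows "specnorm d (\<lambda>j k. R j k / f) = specnorm d R / f"
proof (rule antisym)
  have "specnorm d (\<lambda>j k. R j k / f) \<le> \<bar>1 / f\<bar> * specnorm d R + \<bar>0\<bar> * specnorm d R"
    by (rule specnorm_lin[OF d]) simp
  thus "specnorm d (\<lambda>j k. R j k / f) \<le> specnorm d R / f" using f by simp
  have "specnorm d R \<le> \<bar>f\<bar> * specnorm d (\<lambda>j k. R j k / f) + \<bar>0\<bar> * specnorm d R"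
    by (rule specnorm_lin[OF d]) (use f in simp)
  thus "specnorm d R / f \<le> specnorm d (\<lambda>j k. R j k / f)" using f by (simp add: field_simps)
qed

lemma nd_tri:
  assumes d: "0 < d" and f: "0 < f"
  shows "specnorm d (\<lambda>j k. P j k - R j k / f) \<le> specnorm d P + specnorm d R / f"
    and "specnorm d R / f \<le> specnorm d P + specnorm d (\<lambda>j k. P j k - R j k / f)"
proof -
  have "specnorm d (\<lambda>j k. P j k - R j k / f) \<le> \<bar>1\<bar> * specnorm d P + \<bar>-1\<bar> * specnorm d (\<lambda>j k. R j k / f)"
    by (rule specnorm_lin[OF d]) simp
  thus "specnorm d (\<lambda>j k. P j k - R j k / f) \<le> specnorm d P + specnorm d R / f"
    using specnorm_div[OF d f] by simp
  have "specnorm d (\<lambda>j k. R j k / f) \<le> \<bar>1\<bar> * specnorm d P + \<bar>-1\<bar> * specnorm d (\<lambda>j k. P j k - R j k / f)"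
    by (rule specnorm_lin[OF d]) simp
  thus "specnorm d R / f \<le> specnorm d P + specnorm d (\<lambda>j k. P j k - R j k / f)"
    using specnorm_div[OF d f] by simp
qed

lemma K_bound:
  fixes K :: "nat \<Rightarrow> real"
  assumes O: "(\<lambda>n. K n powr (1/4)) \<in> O(\<lambda>n. real n powr (3/4))" and K0: "\<And>n. 0 \<le> K n"
  shows "\<exists>C>0. eventually (\<lambda>n. K n \<le> C * real n ^ 3) at_top"
proof -
  obtain c where c: "c > 0" and ev: "eventually (\<lambda>n. norm (K n powr (1/4)) \<le> c * norm (real n powr (3/4))) at_top"
    using landau_o.bigE[OF O] by blast
  have "eventually (\<lambda>n. K n \<le> c ^ 4 * real n ^ 3) at_top"
    using ev eventually_gt_at_top[of 0]
  proof eventually_elim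
    case (elim n)
    have a: "K n powr (1/4) \<le> c * real n powr (3/4)" using elim by simp
    have "K n = (K n powr (1/4)) ^ 4"
    proof (cases "K n = 0")
      case True thus ?thesis by simp
    next
      case False
      hence "K n \<noteq> 0" by simp
      thus ?thesis using K0[of n] by (simp add: powr_power)
    qed
    also have "\<dots> \<le> (c * real n powr (3/4)) ^ 4" using a by (intro power_mono) auto
    also have "\<dots> = c ^ 4 * real n ^ 3"
    proof -
      have "(real n powr (3/4)) ^ 4 = real n powr (of_nat 4 * (3/4))"
        using elim by (intro powr_power) simp
      also have "\<dots> = real n ^ 3" using elim by (simp add: powr_realpow)
      finally show ?thesis by (simp add: power_mult_distrib)
    qed
    finally show ?case .
  qed
  thus ?thesis using c by (intro exI[of _ "c ^ 4"]) auto
qed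

lemma arith_bound:
  fixes n :: nat and mu f1 f ET4 K C :: real
  assumes n: "0 < n" and mu: "0 < mu" and f1: "f1\<^sup>2 \<le> mu" and E: "ET4 \<le> 8 * f1 ^ 4 + 8 * f ^ 4 * K"
    and K: "K \<le> C * real n ^ 3" and C: "0 \<le> C"
  shows "ET4 / (real n * mu\<^sup>2) \<le> 8 / real n + 8 * C * (real n * f\<^sup>2 / mu)\<^sup>2"
proof -
  have nr: "0 < real n" using n by simp
  have den: "0 < real n * mu\<^sup>2" using nr mu by simp
  have "ET4 / (real n * mu\<^sup>2) \<le> (8 * f1 ^ 4 + 8 * f ^ 4 * (C * real n ^ 3)) / (real n * mu\<^sup>2)"
  proof -
    have "8 * f ^ 4 * K \<le> 8 * f ^ 4 * (C * real n ^ 3)" using K by (intro mult_left_mono) auto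
    hence "ET4 \<le> 8 * f1 ^ 4 + 8 * f ^ 4 * (C * real n ^ 3)" using E by linarith
    thus ?thesis using den by (intro divide_right_mono) auto
  qed
  also have "\<dots> = 8 * (f1 ^ 4 / (real n * mu\<^sup>2)) + 8 * C * (real n * f\<^sup>2 / mu)\<^sup>2"
  proof -
    have e1: "(8 * f1 ^ 4 + 8 * f ^ 4 * (C * real n ^ 3)) / (real n * mu\<^sup>2)
        = 8 * (f1 ^ 4 / (real n * mu\<^sup>2)) + 8 * C * (real n ^ 3 * f ^ 4 / (real n * mu\<^sup>2))"
      unfolding add_divide_distrib times_divide_eq_right by (simp only: mult_ac)
    have n3: "real n ^ 3 = real n * (real n)\<^sup>2" by (simp add: power2_eq_square power3_eq_cube)
    have f4: "f ^ 4 = (f\<^sup>2)\<^sup>2" by simp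
    have e2: "real n ^ 3 * f ^ 4 / (real n * mu\<^sup>2) = (real n)\<^sup>2 * (f\<^sup>2)\<^sup>2 / mu\<^sup>2"
      unfolding n3 f4 using nr by simp
    have e3: "(real n * f\<^sup>2 / mu)\<^sup>2 = (real n)\<^sup>2 * (f\<^sup>2)\<^sup>2 / mu\<^sup>2"
      by (simp only: power_divide power_mult_distrib)
    show ?thesis unfolding e1 e2 e3 ..
  qed
  finally have main: "ET4 / (real n * mu\<^sup>2) \<le> 8 * (f1 ^ 4 / (real n * mu\<^sup>2)) + 8 * C * (real n * f\<^sup>2 / mu)\<^sup>2" .
  have "f1 ^ 4 / (real n * mu\<^sup>2) \<le> 1 / real n"
  proof -
    have "f1 ^ 4 = (f1\<^sup>2)\<^sup>2" by simp
    also have "\<dots> \<le> mu\<^sup>2" using f1 by (intro power_mono) auto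
    finally have "f1 ^ 4 \<le> mu\<^sup>2" .
    hence "f1 ^ 4 / (real n * mu\<^sup>2) \<le> mu\<^sup>2 / (real n * mu\<^sup>2)" using den by (intro divide_right_mono) auto
    also have "mu\<^sup>2 / (real n * mu\<^sup>2) = 1 / real n" using mu by simp
    finally show ?thesis .
  qed
  moreover have "8 * (1 / real n) = 8 / real n" by simp
  ultimately show ?thesis using main by linarith
qed

lemma per_n_basic:
  assumes model: "iid_model M p X S" and n: "0 < n"
  shows "0 < p n" "0 < fnorm (p n) (S n)" "prob_space (M n)"
    "(\<lambda>\<omega>. specnorm (p n) (norm_diff (p n) n (X n) (S n) \<omega>)) \<in> borel_measurable (M n)"
    "\<And>A B. B \<in> sets (M n) \<Longrightarrow> A \<subseteq> B \<Longrightarrow> measure (M n) A \<le> measure (M n) B"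
    "measure (M n) (space (M n)) = 1"
proof -
  interpret Sm: smodel "M n" n "p n" "X n" "S n" by (rule model_smodel[OF model n])
  show "0 < p n" by (rule Sm.d_pos)
  show "0 < fnorm (p n) (S n)" by (rule Sm.f_pos)
  show "prob_space (M n)" by (rule Sm.prob_space_axioms)
  show "(\<lambda>\<omega>. specnorm (p n) (norm_diff (p n) n (X n) (S n) \<omega>)) \<in> borel_measurable (M n)" by (rule Sm.nd_meas)
  show "\<And>A B. B \<in> sets (M n) \<Longrightarrow> A \<subseteq> B \<Longrightarrow> measure (M n) A \<le> measure (M n) B"
    by (rule Sm.measure_le_subset)
  show "measure (M n) (space (M n)) = 1" by (rule Sm.prob_space)
qed

lemma per_n_i:
  assumes model: "iid_model M p X S" and n: "0 < n"
    and T2: "integrable (M n) (\<lambda>\<omega>. (vdot (p n) (X n 0 \<omega>) (X n 0 \<omega>))\<^sup>2)"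
  shows "0 \<le> integral\<^sup>L (M n) (\<lambda>\<omega>. (frob (p n) (norm_diff (p n) n (X n) (S n) \<omega>))\<^sup>2)"
    "integral\<^sup>L (M n) (\<lambda>\<omega>. (frob (p n) (norm_diff (p n) n (X n) (S n) \<omega>))\<^sup>2)
       \<le> 4 * integral\<^sup>L (M n) (\<lambda>\<omega>. (vdot (p n) (X n 0 \<omega>) (X n 0 \<omega>))\<^sup>2) / (real n * (fnorm (p n) (S n))\<^sup>2)"
    "\<And>e. 0 < e \<Longrightarrow> measure (M n) {\<omega> \<in> space (M n). e < \<bar>specnorm (p n) (norm_diff (p n) n (X n) (S n) \<omega>)\<bar>}
       \<le> 4 * integral\<^sup>L (M n) (\<lambda>\<omega>. (vdot (p n) (X n 0 \<omega>) (X n 0 \<omega>))\<^sup>2) / (real n * (fnorm (p n) (S n))\<^sup>2 * e\<^sup>2)"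
proof -
  interpret Sm: smodel "M n" n "p n" "X n" "S n" by (rule model_smodel[OF model n])
  have T0e: "Sm.T0 = (\<lambda>\<omega>. vdot (p n) (X n 0 \<omega>) (X n 0 \<omega>))" by (simp add: fun_eq_iff Sm.T0_def)
  have T2': "integrable (M n) (\<lambda>\<omega>. (Sm.T0 \<omega>)\<^sup>2)" using T2 T0e by simp
  have mue: "Sm.mu = integral\<^sup>L (M n) (\<lambda>\<omega>. (vdot (p n) (X n 0 \<omega>) (X n 0 \<omega>))\<^sup>2)" by (simp add: Sm.mu_def T0e)
  have ffe: "Sm.ff = fnorm (p n) (S n)" by (simp add: Sm.ff_def)
  show "0 \<le> integral\<^sup>L (M n) (\<lambda>\<omega>. (frob (p n) (norm_diff (p n) n (X n) (S n) \<omega>))\<^sup>2)" by simp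
  show "integral\<^sup>L (M n) (\<lambda>\<omega>. (frob (p n) (norm_diff (p n) n (X n) (S n) \<omega>))\<^sup>2)
       \<le> 4 * integral\<^sup>L (M n) (\<lambda>\<omega>. (vdot (p n) (X n 0 \<omega>) (X n 0 \<omega>))\<^sup>2) / (real n * (fnorm (p n) (S n))\<^sup>2)"
    using Sm.part1_final(1)[OF T2'] unfolding mue ffe .
  fix e :: real assume e: "0 < e"
  show "measure (M n) {\<omega> \<in> space (M n). e < \<bar>specnorm (p n) (norm_diff (p n) n (X n) (S n) \<omega>)\<bar>}
       \<le> 4 * integral\<^sup>L (M n) (\<lambda>\<omega>. (vdot (p n) (X n 0 \<omega>) (X n 0 \<omega>))\<^sup>2) / (real n * (fnorm (p n) (S n))\<^sup>2 * e\<^sup>2)"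
    using Sm.part1_final(2)[OF T2' e] unfolding mue ffe .
qed

lemma per_n_ii:
  assumes model: "iid_model M p X S" and n: "0 < n"
    and T2: "integrable (M n) (\<lambda>\<omega>. (vdot (p n) (X n 0 \<omega>) (X n 0 \<omega>))\<^sup>2)"
    and W4: "integrable (M n) (\<lambda>\<omega>. ((vdot (p n) (X n 0 \<omega>) (X n 0 \<omega>) - mtrace (p n) (S n)) / fnorm (p n) (S n)) ^ 4)"
  defines "mu \<equiv> integral\<^sup>L (M n) (\<lambda>\<omega>. (vdot (p n) (X n 0 \<omega>) (X n 0 \<omega>))\<^sup>2)"
    and "ET4 \<equiv> integral\<^sup>L (M n) (\<lambda>\<omega>. (vdot (p n) (X n 0 \<omega>) (X n 0 \<omega>)) ^ 4)"
    and "K \<equiv> integral\<^sup>L (M n) (\<lambda>\<omega>. ((vdot (p n) (X n 0 \<omega>) (X n 0 \<omega>) - mtrace (p n) (S n)) / fnorm (p n) (S n)) ^ 4)"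
  shows "(mtrace (p n) (S n))\<^sup>2 \<le> mu" "0 \<le> K"
    "ET4 \<le> 8 * (mtrace (p n) (S n)) ^ 4 + 8 * (fnorm (p n) (S n)) ^ 4 * K"
    "\<And>\<epsilon>. 0 < mu \<Longrightarrow> 0 < \<epsilon> \<Longrightarrow> \<exists>E\<in>sets (M n). measure (M n) E \<le> 4 * ET4 / (real n * mu\<^sup>2) + 324 * ET4 / (\<epsilon> ^ 4 * real n * mu\<^sup>2)
             + 18 * real n * (fnorm (p n) (S n))\<^sup>2 / (\<epsilon>\<^sup>2 * mu)
           \<and> (\<forall>\<omega>\<in>space (M n) - E. specnorm (p n) (\<lambda>j k. sample_cov n (X n) \<omega> j k / fnorm (p n) (sample_cov n (X n) \<omega>)) \<le> \<epsilon>)"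
proof -
  interpret Sm: smodel "M n" n "p n" "X n" "S n" by (rule model_smodel[OF model n])
  have T0e: "Sm.T0 = (\<lambda>\<omega>. vdot (p n) (X n 0 \<omega>) (X n 0 \<omega>))" by (simp add: fun_eq_iff Sm.T0_def)
  have T2': "integrable (M n) (\<lambda>\<omega>. (Sm.T0 \<omega>)\<^sup>2)" using T2 T0e by simp
  have mue: "Sm.mu = mu" by (simp add: Sm.mu_def T0e mu_def)
  have ffe: "Sm.ff = fnorm (p n) (S n)" by (simp add: Sm.ff_def)
  have f1e: "Sm.f1 = mtrace (p n) (S n)" by (simp add: Sm.f1_def)
  have ETe: "Sm.ET4 = ET4" by (simp add: Sm.ET4_def T0e ET4_def)
  have Ke: "Sm.Kq = K" by (simp add: Sm.Kq_def T0e K_def f1e ffe)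
  have W4': "integrable (M n) (\<lambda>\<omega>. ((Sm.T0 \<omega> - Sm.f1) / Sm.ff) ^ 4)" using W4 T0e f1e ffe by simp
  show "(mtrace (p n) (S n))\<^sup>2 \<le> mu" using Sm.mu_ge[OF T2'] mue f1e by simp
  show "0 \<le> K" unfolding K_def by (simp add: zero_le_even_power)
  show "ET4 \<le> 8 * (mtrace (p n) (S n)) ^ 4 + 8 * (fnorm (p n) (S n)) ^ 4 * K"
    using Sm.T4(2)[OF W4'] ETe f1e ffe Ke by simp
  fix \<epsilon> :: real assume mp: "0 < mu" and ep: "0 < \<epsilon>"
  have mp': "0 < Sm.mu" using mp mue by simp
  have sc_eq: "(\<lambda>j k. sample_cov n (X n) \<omega> j k / fnorm (p n) (sample_cov n (X n) \<omega>))
      = (\<lambda>j k. sc n (\<lambda>i. X n i \<omega>) j k / fnorm (p n) (sc n (\<lambda>i. X n i \<omega>)))" for \<omega>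
    by (simp add: sample_cov_sc)
  show "\<exists>E\<in>sets (M n). measure (M n) E \<le> 4 * ET4 / (real n * mu\<^sup>2) + 324 * ET4 / (\<epsilon> ^ 4 * real n * mu\<^sup>2)
             + 18 * real n * (fnorm (p n) (S n))\<^sup>2 / (\<epsilon>\<^sup>2 * mu)
           \<and> (\<forall>\<omega>\<in>space (M n) - E. specnorm (p n) (\<lambda>j k. sample_cov n (X n) \<omega> j k / fnorm (p n) (sample_cov n (X n) \<omega>)) \<le> \<epsilon>)"
    using Sm.part2_core[OF T2' Sm.T4(1)[OF W4'] mp' ep] unfolding mue ETe ffe sc_eq .
qed

theorem mainTheorem6:
  fixes M :: "nat \<Rightarrow> 'a measure" and p :: "nat \<Rightarrow> nat"
    and X :: "nat \<Rightarrow> nat \<Rightarrow> 'a \<Rightarrow> nat \<Rightarrow> real"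
    and \<Sigma> :: "nat \<Rightarrow> nat \<Rightarrow> nat \<Rightarrow> real"
  assumes model: "iid_model M p X \<Sigma>"
  shows
  "((\<forall>n>0. integrable (M n) (\<lambda>\<omega>. (vdot (p n) (X n 0 \<omega>) (X n 0 \<omega>))\<^sup>2)) \<and>
    (\<lambda>n. integral\<^sup>L (M n) (\<lambda>\<omega>. (vdot (p n) (X n 0 \<omega>) (X n 0 \<omega>))\<^sup>2))
       \<in> o(\<lambda>n. real n * (fnorm (p n) (\<Sigma> n))\<^sup>2)
    \<longrightarrow>
      (\<lambda>n. integral\<^sup>L (M n) (\<lambda>\<omega>. (frob (p n) (norm_diff (p n) n (X n) (\<Sigma> n) \<omega>))\<^sup>2))
         \<longlonglongrightarrow> 0
      \<and> conv_prob_zero M (\<lambda>n \<omega>. specnorm (p n) (norm_diff (p n) n (X n) (\<Sigma> n) \<omega>)))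
   \<and>
   ((\<forall>n>0. integrable (M n) (\<lambda>\<omega>. (vdot (p n) (X n 0 \<omega>) (X n 0 \<omega>))\<^sup>2)) \<and>
    (\<lambda>n. real n * (fnorm (p n) (\<Sigma> n))\<^sup>2)
       \<in> o(\<lambda>n. integral\<^sup>L (M n) (\<lambda>\<omega>. (vdot (p n) (X n 0 \<omega>) (X n 0 \<omega>))\<^sup>2)) \<and>
    (\<forall>n>0. integrable (M n) (\<lambda>\<omega>.
        ((vdot (p n) (X n 0 \<omega>) (X n 0 \<omega>) - mtrace (p n) (\<Sigma> n)) / fnorm (p n) (\<Sigma> n)) ^ 4)) \<and>
    (\<lambda>n. (integral\<^sup>L (M n) (\<lambda>\<omega>.
        ((vdot (p n) (X n 0 \<omega>) (X n 0 \<omega>) - mtrace (p n) (\<Sigma> n)) / fnorm (p n) (\<Sigma> n)) ^ 4))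
          powr (1/4))
       \<in> O(\<lambda>n. real n powr (3/4)) \<and>
    (\<forall>n>1. integrable (M n) (\<lambda>\<omega>. (vdot (p n) (X n 0 \<omega>) (X n 1 \<omega>)) ^ 4)) \<and>
    (\<lambda>n. integral\<^sup>L (M n) (\<lambda>\<omega>. (vdot (p n) (X n 0 \<omega>) (X n 1 \<omega>)) ^ 4))
       \<in> o(\<lambda>n. (integral\<^sup>L (M n) (\<lambda>\<omega>. (vdot (p n) (X n 0 \<omega>) (X n 0 \<omega>))\<^sup>2))\<^sup>2)
    \<longrightarrow>
      conv_prob_zero M (\<lambda>n \<omega>. specnorm (p n)
          (\<lambda>j k. sample_cov n (X n) \<omega> j k / fnorm (p n) (sample_cov n (X n) \<omega>)))
      \<and> (conv_prob_zero M (\<lambda>n \<omega>. specnorm (p n) (norm_diff (p n) n (X n) (\<Sigma> n) \<omega>))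
         \<longleftrightarrow> (\<lambda>n. specnorm (p n) (\<Sigma> n)) \<in> o(\<lambda>n. fnorm (p n) (\<Sigma> n))))"
proof (rule conjI, goal_cases)
  case 1
  show ?case
  proof (rule impI, elim conjE, goal_cases)
  case 1
  note int2 = 1(1) and lo = 1(2)
  define mu where "mu = (\<lambda>n. integral\<^sup>L (M n) (\<lambda>\<omega>. (vdot (p n) (X n 0 \<omega>) (X n 0 \<omega>))\<^sup>2))"
  define f where "f = (\<lambda>n. fnorm (p n) (\<Sigma> n))"
  have lo': "mu \<in> o(\<lambda>n. real n * (f n)\<^sup>2)" using lo unfolding mu_def f_def .
  have r: "(\<lambda>n. mu n / (real n * (f n)\<^sup>2)) \<longlonglongrightarrow> 0" by (rule smalloD_tendsto[OF lo'])
  have B1: "(\<lambda>n. integral\<^sup>L (M n) (\<lambda>\<omega>. (frob (p n) (norm_diff (p n) n (X n) (\<Sigma> n) \<omega>))\<^sup>2)) \<longlonglongrightarrow> 0"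
  proof (rule tendsto_sandwich[of "\<lambda>_. 0" _ _ "\<lambda>n. 4 * (mu n / (real n * (f n)\<^sup>2))"])
    show "eventually (\<lambda>n. 0 \<le> integral\<^sup>L (M n) (\<lambda>\<omega>. (frob (p n) (norm_diff (p n) n (X n) (\<Sigma> n) \<omega>))\<^sup>2)) sequentially"
      by (rule always_eventually) simp
    show "eventually (\<lambda>n. integral\<^sup>L (M n) (\<lambda>\<omega>. (frob (p n) (norm_diff (p n) n (X n) (\<Sigma> n) \<omega>))\<^sup>2)
        \<le> 4 * (mu n / (real n * (f n)\<^sup>2))) sequentially"
      using eventually_gt_at_top[of 0]
    proof eventually_elim
      case (elim n)
      show ?case using per_n_i(2)[OF model elim int2[rule_format, OF elim]] unfolding mu_def f_def by simp
    qed
    show "(\<lambda>n. 4 * (mu n / (real n * (f n)\<^sup>2))) \<longlonglongrightarrow> 0"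
      using tendsto_mult[OF tendsto_const r, of 4] by simp
  qed simp
  have B2: "conv_prob_zero M (\<lambda>n \<omega>. specnorm (p n) (norm_diff (p n) n (X n) (\<Sigma> n) \<omega>))"
    unfolding conv_prob_zero_def
  proof (intro allI impI)
    fix e :: real assume e: "0 < e"
    show "(\<lambda>n. measure (M n) {\<omega> \<in> space (M n). e < \<bar>specnorm (p n) (norm_diff (p n) n (X n) (\<Sigma> n) \<omega>)\<bar>}) \<longlonglongrightarrow> 0"
    proof (rule tendsto_sandwich[of "\<lambda>_. 0" _ _ "\<lambda>n. (4 / e\<^sup>2) * (mu n / (real n * (f n)\<^sup>2))"])
      show "eventually (\<lambda>n. 0 \<le> measure (M n) {\<omega> \<in> space (M n). e < \<bar>specnorm (p n) (norm_diff (p n) n (X n) (\<Sigma> n) \<omega>)\<bar>}) sequentially"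
        by (rule always_eventually) simp
      show "eventually (\<lambda>n. measure (M n) {\<omega> \<in> space (M n). e < \<bar>specnorm (p n) (norm_diff (p n) n (X n) (\<Sigma> n) \<omega>)\<bar>}
          \<le> (4 / e\<^sup>2) * (mu n / (real n * (f n)\<^sup>2))) sequentially"
        using eventually_gt_at_top[of 0]
      proof eventually_elim
        case (elim n)
        show ?case using per_n_i(3)[OF model elim int2[rule_format, OF elim] e] unfolding mu_def f_def
          by (simp add: field_simps)
      qed
      show "(\<lambda>n. (4 / e\<^sup>2) * (mu n / (real n * (f n)\<^sup>2))) \<longlonglongrightarrow> 0"
        using tendsto_mult[OF tendsto_const r, of "4 / e\<^sup>2"] by simp
    qed simp
  qed
  show ?case using B1 B2 by simp
  qed
next
  case 2
  show ?case
  proof (rule impI, elim conjE, goal_cases)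
  case 1
  note int2 = 1(1) and lo2 = 1(2) and intW = 1(3) and Kbig = 1(4)
  define mu where "mu = (\<lambda>n. integral\<^sup>L (M n) (\<lambda>\<omega>. (vdot (p n) (X n 0 \<omega>) (X n 0 \<omega>))\<^sup>2))"
  define f where "f = (\<lambda>n. fnorm (p n) (\<Sigma> n))"
  define ET4 where "ET4 = (\<lambda>n. integral\<^sup>L (M n) (\<lambda>\<omega>. (vdot (p n) (X n 0 \<omega>) (X n 0 \<omega>)) ^ 4))"
  define K where "K = (\<lambda>n. integral\<^sup>L (M n) (\<lambda>\<omega>. ((vdot (p n) (X n 0 \<omega>) (X n 0 \<omega>) - mtrace (p n) (\<Sigma> n)) / fnorm (p n) (\<Sigma> n)) ^ 4))"
  define r where "r = (\<lambda>n. real n * (f n)\<^sup>2 / mu n)"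
  define Sf where "Sf = (\<lambda>n \<omega>. (\<lambda>j k. sample_cov n (X n) \<omega> j k / fnorm (p n) (sample_cov n (X n) \<omega>)))"
  have lo2': "(\<lambda>n. real n * (f n)\<^sup>2) \<in> o(mu)" using lo2 unfolding mu_def f_def .
  have Kbig': "(\<lambda>n. K n powr (1/4)) \<in> O(\<lambda>n. real n powr (3/4))" using Kbig unfolding K_def .
  have K0: "0 \<le> K n" for n unfolding K_def by (rule integral_nonneg_AE) (simp add: zero_le_even_power)
  have mu0: "0 \<le> mu n" for n unfolding mu_def by (rule integral_nonneg_AE) simp
  obtain C where Cp: "C > 0" and evK: "eventually (\<lambda>n. K n \<le> C * real n ^ 3) sequentially"
    using K_bound[OF Kbig' K0] by blast
  have rlim: "r \<longlonglongrightarrow> 0" using smalloD_tendsto[OF lo2'] unfolding r_def .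
  have h12: "eventually (\<lambda>n. norm (real n * (f n)\<^sup>2) \<le> 1/2 * norm (mu n)) sequentially"
    by (rule landau_o.smallD[OF lo2']) simp
  have mupos: "eventually (\<lambda>n. 0 < mu n) sequentially"
    using h12 eventually_gt_at_top[of 0]
  proof eventually_elim
    case (elim n)
    have "0 < f n" unfolding f_def by (rule per_n_basic(2)[OF model elim(2)])
    hence "0 < real n * (f n)\<^sup>2" using elim(2) by simp
    thus ?case using elim(1) mu0[of n] by simp
  qed
  have Sf_nonneg: "0 \<le> specnorm (p n) (Sf n \<omega>)" if "0 < n" for n \<omega>
    by (rule specnorm_nonneg[OF per_n_basic(1)[OF model that]])
  have ev: "\<exists>G. G \<longlonglongrightarrow> 0 \<and> eventually (\<lambda>n. \<exists>E\<in>sets (M n). measure (M n) E \<le> G n \<and>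
        (\<forall>\<omega>\<in>space (M n) - E. specnorm (p n) (Sf n \<omega>) \<le> \<epsilon>)) sequentially" if eps: "0 < \<epsilon>" for \<epsilon>
  proof (intro exI conjI)
    define G where "G = (\<lambda>n. (4 + 324 / \<epsilon> ^ 4) * (8 / real n + 8 * C * (r n)\<^sup>2) + 18 / \<epsilon>\<^sup>2 * r n)"
    have t1: "(\<lambda>n. 8 / real n + 8 * C * (r n)\<^sup>2) \<longlonglongrightarrow> 0"
      using tendsto_add[OF lim_const_over_n[of 8] tendsto_mult[OF tendsto_const[of "8 * C"] tendsto_power[OF rlim, of 2]]]
      by simp
    show "G \<longlonglongrightarrow> 0" unfolding G_def
      using tendsto_add[OF tendsto_mult[OF tendsto_const[of "4 + 324 / \<epsilon> ^ 4"] t1] tendsto_mult[OF tendsto_const[of "18 / \<epsilon>\<^sup>2"] rlim]]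
      by simp
    show "eventually (\<lambda>n. \<exists>E\<in>sets (M n). measure (M n) E \<le> G n \<and>
        (\<forall>\<omega>\<in>space (M n) - E. specnorm (p n) (Sf n \<omega>) \<le> \<epsilon>)) sequentially"
      using evK mupos eventually_gt_at_top[of 0]
    proof eventually_elim
      case (elim n)
      note n = elim(3)
      note pn = per_n_ii[OF model n int2[rule_format, OF n] intW[rule_format, OF n]]
      obtain E where E: "E \<in> sets (M n)"
        and mE: "measure (M n) E \<le> 4 * ET4 n / (real n * (mu n)\<^sup>2) + 324 * ET4 n / (\<epsilon> ^ 4 * real n * (mu n)\<^sup>2)
             + 18 * real n * (f n)\<^sup>2 / (\<epsilon>\<^sup>2 * mu n)"
        and gE: "\<forall>\<omega>\<in>space (M n) - E. specnorm (p n) (Sf n \<omega>) \<le> \<epsilon>"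
        using pn(4)[OF elim(2)[unfolded mu_def] eps] unfolding mu_def ET4_def f_def Sf_def by blast
      define q where "q = ET4 n / (real n * (mu n)\<^sup>2)"
      have q: "q \<le> 8 / real n + 8 * C * (r n)\<^sup>2"
        unfolding q_def r_def
        by (rule arith_bound[OF n elim(2)]) (use pn(1,3) elim(1) Cp in \<open>auto simp: mu_def ET4_def K_def f_def\<close>)
      have eq: "4 * ET4 n / (real n * (mu n)\<^sup>2) + 324 * ET4 n / (\<epsilon> ^ 4 * real n * (mu n)\<^sup>2)
             + 18 * real n * (f n)\<^sup>2 / (\<epsilon>\<^sup>2 * mu n) = (4 + 324 / \<epsilon> ^ 4) * q + 18 / \<epsilon>\<^sup>2 * r n"
        unfolding q_def r_def using eps elim(2) n by (simp add: field_simps)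
      have "(4 + 324 / \<epsilon> ^ 4) * q \<le> (4 + 324 / \<epsilon> ^ 4) * (8 / real n + 8 * C * (r n)\<^sup>2)"
        using q eps by (intro mult_left_mono) auto
      hence "measure (M n) E \<le> G n" using mE unfolding eq G_def by linarith
      thus ?case using E gE by blast
    qed
  qed
  have D1: "conv_prob_zero M (\<lambda>n \<omega>. specnorm (p n) (Sf n \<omega>))"
    unfolding conv_prob_zero_def
  proof (intro allI impI)
    fix e :: real assume e: "0 < e"
    obtain G where G: "G \<longlonglongrightarrow> 0" and evG: "eventually (\<lambda>n. \<exists>E\<in>sets (M n). measure (M n) E \<le> G n \<and>
        (\<forall>\<omega>\<in>space (M n) - E. specnorm (p n) (Sf n \<omega>) \<le> e / 2)) sequentially"
      using ev[of "e / 2"] e by auto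
    show "(\<lambda>n. measure (M n) {\<omega> \<in> space (M n). e < \<bar>specnorm (p n) (Sf n \<omega>)\<bar>}) \<longlonglongrightarrow> 0"
    proof (rule tendsto_sandwich[of "\<lambda>_. 0" _ _ G])
      show "eventually (\<lambda>n. 0 \<le> measure (M n) {\<omega> \<in> space (M n). e < \<bar>specnorm (p n) (Sf n \<omega>)\<bar>}) sequentially"
        by (rule always_eventually) simp
      show "eventually (\<lambda>n. measure (M n) {\<omega> \<in> space (M n). e < \<bar>specnorm (p n) (Sf n \<omega>)\<bar>} \<le> G n) sequentially"
        using evG eventually_gt_at_top[of 0]
      proof eventually_elim
        case (elim n)
        then obtain E where E: "E \<in> sets (M n)" "measure (M n) E \<le> G n"
          "\<forall>\<omega>\<in>space (M n) - E. specnorm (p n) (Sf n \<omega>) \<le> e / 2" by blast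
        have "{\<omega> \<in> space (M n). e < \<bar>specnorm (p n) (Sf n \<omega>)\<bar>} \<subseteq> E"
        proof
          fix \<omega> assume w: "\<omega> \<in> {\<omega> \<in> space (M n). e < \<bar>specnorm (p n) (Sf n \<omega>)\<bar>}"
          show "\<omega> \<in> E"
          proof (rule ccontr)
            assume "\<omega> \<notin> E"
            hence "specnorm (p n) (Sf n \<omega>) \<le> e / 2" using E(3) w by auto
            moreover have "0 \<le> specnorm (p n) (Sf n \<omega>)" by (rule Sf_nonneg[OF elim(2)])
            ultimately show False using w e by auto
          qed
        qed
        hence "measure (M n) {\<omega> \<in> space (M n). e < \<bar>specnorm (p n) (Sf n \<omega>)\<bar>} \<le> measure (M n) E"
          by (rule per_n_basic(5)[OF model elim(2) E(1)])
        thus ?case using E(2) by linarith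
      qed
    qed (simp_all add: G)
  qed
  have nd_eq: "norm_diff (p n) n (X n) (\<Sigma> n) \<omega> = (\<lambda>j k. Sf n \<omega> j k - \<Sigma> n j k / f n)" for n \<omega>
    by (simp add: fun_eq_iff norm_diff_def Sf_def f_def)
  have D23: "conv_prob_zero M (\<lambda>n \<omega>. specnorm (p n) (norm_diff (p n) n (X n) (\<Sigma> n) \<omega>))
         \<longleftrightarrow> (\<lambda>n. specnorm (p n) (\<Sigma> n)) \<in> o(f)"
  proof
    assume cp: "conv_prob_zero M (\<lambda>n \<omega>. specnorm (p n) (norm_diff (p n) n (X n) (\<Sigma> n) \<omega>))"
    show "(\<lambda>n. specnorm (p n) (\<Sigma> n)) \<in> o(f)"
    proof (rule smalloI_tendsto)
      show "eventually (\<lambda>n. f n \<noteq> 0) sequentially"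
        using eventually_gt_at_top[of 0]
      proof eventually_elim
        case (elim n) thus ?case using per_n_basic(2)[OF model elim] unfolding f_def by simp
      qed
      show "(\<lambda>n. specnorm (p n) (\<Sigma> n) / f n) \<longlonglongrightarrow> 0"
      proof (rule order_tendstoI)
        fix a :: real assume a: "a < 0"
        show "eventually (\<lambda>n. a < specnorm (p n) (\<Sigma> n) / f n) sequentially"
          using eventually_gt_at_top[of 0]
        proof eventually_elim
          case (elim n)
          have "0 \<le> specnorm (p n) (\<Sigma> n)" by (rule specnorm_nonneg[OF per_n_basic(1)[OF model elim]])
          moreover have "0 < f n" using per_n_basic(2)[OF model elim] unfolding f_def .
          ultimately have "0 \<le> specnorm (p n) (\<Sigma> n) / f n" by simp
          thus ?case using a by linarith
        qed
      next
        fix e :: real assume e: "0 < e"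
        obtain G where G: "G \<longlonglongrightarrow> 0" and evG: "eventually (\<lambda>n. \<exists>E\<in>sets (M n). measure (M n) E \<le> G n \<and>
            (\<forall>\<omega>\<in>space (M n) - E. specnorm (p n) (Sf n \<omega>) \<le> e / 4)) sequentially"
          using ev[of "e / 4"] e by auto
        have evG1: "eventually (\<lambda>n. G n < 1/2) sequentially" by (rule order_tendstoD(2)[OF G]) simp
        have e4: "0 < e / 4" using e by simp
        have "(\<lambda>n. measure (M n) {\<omega> \<in> space (M n). e / 4 < \<bar>specnorm (p n) (norm_diff (p n) n (X n) (\<Sigma> n) \<omega>)\<bar>}) \<longlonglongrightarrow> 0"
          using cp[unfolded conv_prob_zero_def, rule_format, OF e4] .
        hence evF: "eventually (\<lambda>n. measure (M n) {\<omega> \<in> space (M n). e / 4 < \<bar>specnorm (p n) (norm_diff (p n) n (X n) (\<Sigma> n) \<omega>)\<bar>} < 1/2) sequentially"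
          by (rule order_tendstoD(2)) simp
        show "eventually (\<lambda>n. specnorm (p n) (\<Sigma> n) / f n < e) sequentially"
          using evG evG1 evF eventually_gt_at_top[of 0]
        proof eventually_elim
          case (elim n)
          note n = elim(4)
          obtain E where E: "E \<in> sets (M n)" "measure (M n) E \<le> G n"
            "\<forall>\<omega>\<in>space (M n) - E. specnorm (p n) (Sf n \<omega>) \<le> e / 4" using elim(1) by blast
          define F where "F = {\<omega> \<in> space (M n). e / 4 < \<bar>specnorm (p n) (norm_diff (p n) n (X n) (\<Sigma> n) \<omega>)\<bar>}"
          have Fs: "F \<in> sets (M n)" unfolding F_def using per_n_basic(4)[OF model n] by measurable
          have "measure (M n) (E \<union> F) \<le> measure (M n) E + measure (M n) F" by (rule measure_Un_le[OF E(1) Fs])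
          hence mEF: "measure (M n) (E \<union> F) < 1" using E(2) elim(2) elim(3) unfolding F_def by linarith
          have "\<exists>\<omega>\<in>space (M n). \<omega> \<notin> E \<and> \<omega> \<notin> F"
          proof (rule ccontr)
            assume "\<not> (\<exists>\<omega>\<in>space (M n). \<omega> \<notin> E \<and> \<omega> \<notin> F)"
            hence "space (M n) \<subseteq> E \<union> F" by blast
            hence "measure (M n) (space (M n)) \<le> measure (M n) (E \<union> F)"
              using per_n_basic(5)[OF model n] E(1) Fs by blast
            thus False using mEF per_n_basic(6)[OF model n] by linarith
          qed
          then obtain \<omega> where w: "\<omega> \<in> space (M n)" "\<omega> \<notin> E" "\<omega> \<notin> F" by blast
          have dp: "0 < p n" and fp: "0 < f n" using per_n_basic(1,2)[OF model n] unfolding f_def by auto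
          have "specnorm (p n) (\<Sigma> n) / f n \<le> specnorm (p n) (Sf n \<omega>) + specnorm (p n) (\<lambda>j k. Sf n \<omega> j k - \<Sigma> n j k / f n)"
            by (rule nd_tri(2)[OF dp fp])
          moreover have "specnorm (p n) (Sf n \<omega>) \<le> e / 4" using E(3) w by auto
          moreover have "specnorm (p n) (\<lambda>j k. Sf n \<omega> j k - \<Sigma> n j k / f n) \<le> e / 4"
          proof -
            have "\<not> e / 4 < \<bar>specnorm (p n) (norm_diff (p n) n (X n) (\<Sigma> n) \<omega>)\<bar>" using w unfolding F_def by auto
            thus ?thesis unfolding nd_eq by simp
          qed
          ultimately show ?case using e by linarith
        qed
      qed
    qed
  next
    assume so: "(\<lambda>n. specnorm (p n) (\<Sigma> n)) \<in> o(f)"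
    have tl: "(\<lambda>n. specnorm (p n) (\<Sigma> n) / f n) \<longlonglongrightarrow> 0" by (rule smalloD_tendsto[OF so])
    show "conv_prob_zero M (\<lambda>n \<omega>. specnorm (p n) (norm_diff (p n) n (X n) (\<Sigma> n) \<omega>))"
      unfolding conv_prob_zero_def
    proof (intro allI impI)
      fix e :: real assume e: "0 < e"
      obtain G where G: "G \<longlonglongrightarrow> 0" and evG: "eventually (\<lambda>n. \<exists>E\<in>sets (M n). measure (M n) E \<le> G n \<and>
          (\<forall>\<omega>\<in>space (M n) - E. specnorm (p n) (Sf n \<omega>) \<le> e / 2)) sequentially"
        using ev[of "e / 2"] e by auto
      have evT: "eventually (\<lambda>n. specnorm (p n) (\<Sigma> n) / f n < e / 2) sequentially"
        by (rule order_tendstoD(2)[OF tl]) (use e in simp)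
      show "(\<lambda>n. measure (M n) {\<omega> \<in> space (M n). e < \<bar>specnorm (p n) (norm_diff (p n) n (X n) (\<Sigma> n) \<omega>)\<bar>}) \<longlonglongrightarrow> 0"
      proof (rule tendsto_sandwich[of "\<lambda>_. 0" _ _ G])
        show "eventually (\<lambda>n. 0 \<le> measure (M n) {\<omega> \<in> space (M n). e < \<bar>specnorm (p n) (norm_diff (p n) n (X n) (\<Sigma> n) \<omega>)\<bar>}) sequentially"
          by (rule always_eventually) simp
        show "eventually (\<lambda>n. measure (M n) {\<omega> \<in> space (M n). e < \<bar>specnorm (p n) (norm_diff (p n) n (X n) (\<Sigma> n) \<omega>)\<bar>} \<le> G n) sequentially"
          using evG evT eventually_gt_at_top[of 0]
        proof eventually_elim
          case (elim n)
          note n = elim(3)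
          obtain E where E: "E \<in> sets (M n)" "measure (M n) E \<le> G n"
            "\<forall>\<omega>\<in>space (M n) - E. specnorm (p n) (Sf n \<omega>) \<le> e / 2" using elim(1) by blast
          have dp: "0 < p n" and fp: "0 < f n" using per_n_basic(1,2)[OF model n] unfolding f_def by auto
          have "{\<omega> \<in> space (M n). e < \<bar>specnorm (p n) (norm_diff (p n) n (X n) (\<Sigma> n) \<omega>)\<bar>} \<subseteq> E"
          proof
            fix \<omega> assume w: "\<omega> \<in> {\<omega> \<in> space (M n). e < \<bar>specnorm (p n) (norm_diff (p n) n (X n) (\<Sigma> n) \<omega>)\<bar>}"
            show "\<omega> \<in> E"
            proof (rule ccontr)
              assume "\<omega> \<notin> E"
              hence a: "specnorm (p n) (Sf n \<omega>) \<le> e / 2" using E(3) w by auto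
              have b: "specnorm (p n) (\<lambda>j k. Sf n \<omega> j k - \<Sigma> n j k / f n) \<le> specnorm (p n) (Sf n \<omega>) + specnorm (p n) (\<Sigma> n) / f n"
                by (rule nd_tri(1)[OF dp fp])
              have c: "0 \<le> specnorm (p n) (\<lambda>j k. Sf n \<omega> j k - \<Sigma> n j k / f n)" by (rule specnorm_nonneg[OF dp])
              show False using w a b c elim(2) unfolding nd_eq by auto
            qed
          qed
          hence "measure (M n) {\<omega> \<in> space (M n). e < \<bar>specnorm (p n) (norm_diff (p n) n (X n) (\<Sigma> n) \<omega>)\<bar>} \<le> measure (M n) E"
            by (rule per_n_basic(5)[OF model n E(1)])
          thus ?case using E(2) by linarith
        qed
      qed (simp_all add: G)
    qed
  qed

  show ?case using D1 D23 unfolding Sf_def f_def by simp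
  qed
qed

end
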